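(* Let $k\in\mathbb Z_{>0}$, $1+\frac1n<p<1+\frac{k+1}{kn}$, and $u_0\in L^1(\mathbb R^n)$. Then for every $q\in[1,\infty]$ there exists $C>0$ such that for all $t>1$, $$t^{\frac n2(1-\frac1q)}\|\mathcal A_{0,k}(t)\|_q\le C,\qquad t^{\frac n2(1-\frac1q)}\|\mathcal A_{0,k}(t)-\mathcal A_{0,k-1}(t)\|_q\le Ct^{-k\sigma}.$$ Moreover, for $k=1$ the second estimate holds for all $t>0$.
   Context: Let $n\ge1$, $a\in\mathbb R^n\setminus\{0\}$, $p\in(1,\infty)$, and let $f\in C^1(\mathbb R)$, $f\not\equiv0$, $f(0)=0$, satisfy $|f(\xi)-f(\eta)|\le C(|\xi|^{p-1}+|\eta|^{p-1})|\xi-\eta|$. $\|\cdot\|_q$ is the $L^q(\mathbb R^n)$ norm. $G_t(x)=(4\pi t)^{-n/2}e^{-|x|^2/(4t)}$, $e^{t\Delta}\varphi=G_t*\varphi$. $\mathcal M_0(\varphi)=\int\varphi$; $\mathcal A_0(t)=\mathcal M_0(u_0)G_t$; $\sigma=\frac n2(p-1)-\frac12$. $\mathcal A_{0,0}=\mathcal A_0$, and for $k\ge1$, $\mathcal A_{0,k}(t)=\mathcal A_0(t)+\int_0^1a\cdot\nabla e^{(t-s)\Delta}f(\mathcal A_0(s))ds+\int_1^ta\cdot\nabla e^{(t-s)\Delta}f(\mathcal A_{0,k-1}(s))ds$ (for $k=1$ this equals $\mathcal A_0(t)+\int_0^ta\cdot\nabla e^{(t-s)\Delta}f(\mathcal A_0(s))ds$,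 defined for all $t>0$). *)

theory Defs
  imports "HOL-Analysis.Analysis" "HOL-Probability.Probability"
begin

text \<open>Space R^n is modelled by a Euclidean space type 'a, with n = DIM('a);
  Lebesgue measure is lborel.\<close>

definition heat_kernel :: "real \<Rightarrow> 'a::euclidean_space \<Rightarrow> real" where
  "heat_kernel t x = (4 * pi * t) powr (- real DIM('a) / 2) * exp (- (norm x)\<^sup>2 / (4 * t))"

definition heat :: "real \<Rightarrow> ('a::euclidean_space \<Rightarrow> real) \<Rightarrow> 'a \<Rightarrow> real" where
  "heat t \<phi> x = (\<integral> y. heat_kernel t (x - y) * \<phi> y \<partial>lborel)"

definition dir_deriv :: "'a::euclidean_space \<Rightarrow> ('a \<Rightarrow> real) \<Rightarrow> 'a \<Rightarrow> real" where
  "dir_deriv a h x = deriv (\<lambda>\<epsilon>. h (x + \<epsilon> *\<^sub>R a)) 0"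

definition Lq_norm :: "ereal \<Rightarrow> ('a::euclidean_space \<Rightarrow> real) \<Rightarrow> ennreal" where
  "Lq_norm q g =
     (if q = \<infinity> then esssup lborel (\<lambda>x. ennreal \<bar>g x\<bar>)
      else (let I = (\<integral>\<^sup>+ x. ennreal (\<bar>g x\<bar> powr real_of_ereal q) \<partial>lborel)
            in if I = \<infinity> then \<infinity> else ennreal (enn2real I powr (1 / real_of_ereal q))))"

definition inv_exp :: "ereal \<Rightarrow> real" where
  "inv_exp q = (if q = \<infinity> then 0 else 1 / real_of_ereal q)"

definition mass :: "('a::euclidean_space \<Rightarrow> real) \<Rightarrow> real" where
  "mass \<phi> = (\<integral> x. \<phi> x \<partial>lborel)"

definition A0 :: "('a::euclidean_space \<Rightarrow> real) \<Rightarrow> real \<Rightarrow> 'a \<Rightarrow> real" where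
  "A0 u0 t x = mass u0 * heat_kernel t x"

definition duhamel :: "'a::euclidean_space \<Rightarrow> (real \<Rightarrow> real) \<Rightarrow> (real \<Rightarrow> 'a \<Rightarrow> real)
    \<Rightarrow> real set \<Rightarrow> real \<Rightarrow> 'a \<Rightarrow> real" where
  "duhamel a f U S t x = (\<integral> s\<in>S. dir_deriv a (heat (t - s) (\<lambda>y. f (U s y))) x \<partial>lborel)"

fun Aiter :: "'a::euclidean_space \<Rightarrow> (real \<Rightarrow> real) \<Rightarrow> ('a \<Rightarrow> real) \<Rightarrow> nat \<Rightarrow> real \<Rightarrow> 'a \<Rightarrow> real" where
  "Aiter a f u0 0 t x = A0 u0 t x"
| "Aiter a f u0 (Suc 0) t x = A0 u0 t x + duhamel a f (A0 u0) {0<..<t} t x"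
| "Aiter a f u0 (Suc (Suc k)) t x =
     A0 u0 t x + duhamel a f (A0 u0) {0<..<1} t x
       + duhamel a f (Aiter a f u0 (Suc k)) {1<..<t} t x"

end

theory Submission
  imports Defs
begin


lemma gauss1_fin: "(\<integral>\<^sup>+x. ennreal (exp (- x\<^sup>2)) \<partial>(lborel::real measure)) < \<infinity>"
proof -
  have "integrable lborel (normal_density 0 (1/sqrt 2))" by simp
  then have "integrable lborel (\<lambda>x. sqrt pi * normal_density 0 (1/sqrt 2) x)" by simp
  moreover have "(\<lambda>x. sqrt pi * normal_density 0 (1/sqrt 2) x) = (\<lambda>x. exp (- x\<^sup>2))"
    by (auto simp: normal_density_def power_divide real_sqrt_mult)
  ultimately have "integrable lborel (\<lambda>x::real. exp (- x\<^sup>2))" by simp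
  then show ?thesis by (simp add: integrable_iff_bounded)
qed

lemma gauss_fin: "(\<integral>\<^sup>+x. ennreal (exp (- (norm (x::'a::euclidean_space))\<^sup>2)) \<partial>lborel) < \<infinity>"
proof -
  have eq: "ennreal (exp (- (norm x)\<^sup>2)) = (\<Prod>b\<in>Basis. ennreal (exp (- (x \<bullet> b)\<^sup>2)))" for x :: 'a
  proof -
    have "(norm x)\<^sup>2 = (\<Sum>b\<in>Basis. (x \<bullet> b)\<^sup>2)"
      unfolding power2_norm_eq_inner by (subst euclidean_inner) (simp add: power2_eq_square)
    then have "exp (- (norm x)\<^sup>2) = (\<Prod>b\<in>Basis. exp (- (x \<bullet> b)\<^sup>2))"
      by (simp add: exp_sum[symmetric] sum_negf)
    then show ?thesis by (simp add: prod_ennreal)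
  qed
  have "(\<integral>\<^sup>+x. ennreal (exp (- (norm (x::'a))\<^sup>2)) \<partial>lborel) = (\<Prod>b\<in>(Basis::'a set). (\<integral>\<^sup>+x. ennreal (exp (- x\<^sup>2)) \<partial>lborel))"
    unfolding eq by (rule nn_integral_lborel_prod) auto
  also have "\<dots> < \<infinity>" using gauss1_fin by (simp add: less_top[symmetric] ennreal_prod_eq_top power_eq_top_ennreal)
  finally show ?thesis .
qed


lemma beta_nn:
  assumes "0 \<le> \<beta>" "\<beta> < 1"
  shows "(\<integral>\<^sup>+u. ennreal (indicator {0<..<1} u * (u powr (-\<beta>) * (1 - u) powr (-1/2))) \<partial>lborel)
     = ennreal (Beta (1 - \<beta>) (1/2))"
proof -
  have "((\<lambda>t. t powr ((1 - \<beta>) - 1) * (1 - t) powr (1/2 - 1)) has_integral Beta (1 - \<beta>) (1/2)) {0..1}"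
    using assms by (intro has_integral_Beta_real) auto
  then have "((\<lambda>t. t powr (- \<beta>) * (1 - t) powr (-1/2)) has_integral Beta (1 - \<beta>) (1/2)) {0<..<1}"
    by (simp add: has_integral_Icc_iff_Ioo)
  from nn_integral_has_integral_lebesgue[OF _ this]
  show ?thesis by (simp add: mult_ac)
qed

lemma time_int:
  assumes b: "0 \<le> \<beta>" "\<beta> < 1" and t: "0 < t"
  shows "(\<integral>\<^sup>+s. ennreal (indicator {0<..<t} s * ((t - s) powr (-1/2) * s powr (-\<beta>))) \<partial>lborel)
     = ennreal (Beta (1 - \<beta>) (1/2) * t powr (1/2 - \<beta>))"
proof -
  let ?h = "\<lambda>s. ennreal (indicator {0<..<t} s * ((t - s) powr (-1/2) * s powr (-\<beta>)))"
  have "(\<integral>\<^sup>+s. ?h s \<partial>lborel) = ennreal \<bar>t\<bar> * (\<integral>\<^sup>+u. ?h (0 + t * u) \<partial>lborel)"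
    using t by (intro nn_integral_real_affine) auto
  also have "(\<lambda>u. ?h (0 + t * u)) = (\<lambda>u. ennreal (t powr (-1/2 - \<beta>)) *
        ennreal (indicator {0<..<1} u * (u powr (-\<beta>) * (1 - u) powr (-1/2))))"
  proof
    fix u
    show "?h (0 + t * u) = ennreal (t powr (-1/2 - \<beta>)) *
        ennreal (indicator {0<..<1} u * (u powr (-\<beta>) * (1 - u) powr (-1/2)))"
    proof (cases "0 < u \<and> u < 1")
      case True
      have e1: "t - t * u = t * (1 - u)" by (simp add: algebra_simps)
      have "(t * (1 - u)) powr (-1/2) * (t * u) powr (-\<beta>)
          = t powr (-1/2 - \<beta>) * (u powr (-\<beta>) * (1 - u) powr (-1/2))"
      proof -
        have "(t * (1 - u)) powr (-1/2) = t powr (-1/2) * (1 - u) powr (-1/2)"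
          using True t by (simp add: powr_mult)
        moreover have "(t * u) powr (-\<beta>) = t powr (-\<beta>) * u powr (-\<beta>)"
          using True t by (simp add: powr_mult)
        moreover have "t powr (-1/2 - \<beta>) = t powr (-1/2) * t powr (-\<beta>)"
          by (simp add: powr_add[symmetric])
        ultimately show ?thesis by simp
      qed
      then show ?thesis using True t
        by (simp add: e1 indicator_def ennreal_mult[symmetric] mult_pos_pos)
    next
      case False
      then have "t * u \<notin> {0<..<t}" using t
        by (auto simp: zero_less_mult_iff mult_less_cancel_left1)
      then have "indicator {0<..<t} (0 + t*u) = (0::real)" by (simp add: indicator_def)
      moreover have "indicator {0<..<1} u = (0::real)" using False by (simp add: indicator_def)
      ultimately show ?thesis by simp
    qed
  qed
  also have "(\<integral>\<^sup>+u. ennreal (t powr (-1/2 - \<beta>)) *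
        ennreal (indicator {0<..<1} u * (u powr (-\<beta>) * (1 - u) powr (-1/2))) \<partial>lborel)
     = ennreal (t powr (-1/2 - \<beta>)) * ennreal (Beta (1 - \<beta>) (1/2))"
    using beta_nn[OF b] by (subst nn_integral_cmult) auto
  also have "ennreal \<bar>t\<bar> * (ennreal (t powr (-1/2 - \<beta>)) * ennreal (Beta (1 - \<beta>) (1/2)))
      = ennreal (Beta (1 - \<beta>) (1/2) * t powr (1/2 - \<beta>))"
  proof -
    have "t * t powr (-1/2 - \<beta>) = t powr (1/2 - \<beta>)"
      using t by (simp add: powr_add[symmetric] powr_mult_base)
    moreover have "Beta (1 - \<beta>) (1/2) \<ge> 0" using b by (simp add: Beta_def)
    ultimately show ?thesis using t
      by (simp add: ennreal_mult[symmetric] mult_ac)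
  qed
  finally show ?thesis .
qed


definition KG :: "'a::euclidean_space itself \<Rightarrow> ennreal" where
  "KG _ = (\<integral>\<^sup>+x. ennreal (exp (- (norm (x::'a))\<^sup>2)) \<partial>lborel)"

lemma gauss_affine:
  fixes z :: "'a::euclidean_space"
  assumes c: "0 < c"
  shows "(\<integral>\<^sup>+x. ennreal (exp (- c * (norm (x - z))\<^sup>2)) \<partial>lborel)
       = ennreal (c powr (- real DIM('a) / 2)) * KG TYPE('a)"
proof -
  define r where "r = 1 / sqrt c"
  have r: "r \<noteq> 0" "0 < r" using c by (auto simp: r_def)
  let ?F = "\<lambda>x::'a. ennreal (exp (- c * (norm (x - z))\<^sup>2))"
  have eq: "lborel = density (distr lborel borel (\<lambda>x::'a. z + r *\<^sub>R x)) (\<lambda>_. \<bar>r\<bar>^DIM('a))"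
    by (rule lborel_affine) (use r in auto)
  have "integral\<^sup>N lborel ?F = integral\<^sup>N (density (distr lborel borel (\<lambda>x::'a. z + r *\<^sub>R x)) (\<lambda>_. \<bar>r\<bar>^DIM('a))) ?F"
    by (rule arg_cong[of _ _ "\<lambda>M. integral\<^sup>N M ?F"], rule eq)
  also have "\<dots> = (\<integral>\<^sup>+x. ennreal (\<bar>r\<bar>^DIM('a)) * ?F x \<partial>distr lborel borel (\<lambda>x::'a. z + r *\<^sub>R x))"
    by (subst nn_integral_density) auto
  also have "\<dots> = (\<integral>\<^sup>+x. ennreal (\<bar>r\<bar>^DIM('a)) * ?F (z + r *\<^sub>R x) \<partial>lborel)"
    by (subst nn_integral_distr) auto
  also have "\<dots> = (\<integral>\<^sup>+x. ennreal (\<bar>r\<bar>^DIM('a)) * ennreal (exp (- (norm (x::'a))\<^sup>2)) \<partial>lborel)"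
  proof -
    have pw: "exp (- c * (norm (z + r *\<^sub>R x - z))\<^sup>2) = exp (- (norm x)\<^sup>2)" for x :: 'a
      using c r by (simp add: r_def power_mult_distrib real_sqrt_pow2 power_divide)
    show ?thesis unfolding pw by simp
  qed
  also have "\<dots> = ennreal (\<bar>r\<bar>^DIM('a)) * KG TYPE('a)"
    by (subst nn_integral_cmult) (auto simp: KG_def)
  also have "\<bar>r\<bar>^DIM('a) = c powr (- real DIM('a) / 2)"
  proof -
    have "\<bar>r\<bar>^DIM('a) = r powr real DIM('a)" using r by (simp add: powr_realpow)
    also have "\<dots> = (c powr (-1/2)) powr real DIM('a)"
      using c by (simp add: r_def powr_minus_divide powr_half_sqrt)
    also have "\<dots> = c powr (- real DIM('a) / 2)" by (simp add: powr_powr)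
    finally show ?thesis .
  qed
  finally show ?thesis .
qed

lemma sq_real: "0 < (\<alpha>::real) \<Longrightarrow> 0 < \<beta> \<Longrightarrow> \<alpha> * (X - 2 * Z + Y) + \<beta> * Y = (\<alpha> * \<beta> / (\<alpha> + \<beta>)) * X + (\<alpha> + \<beta>) * (Y - 2 * (\<alpha> / (\<alpha> + \<beta>)) * Z + (\<alpha> / (\<alpha> + \<beta>)) * (\<alpha> / (\<alpha> + \<beta>)) * X)"
proof -
  assume a: "0 < \<alpha>" "0 < \<beta>"
  define s where "s = \<alpha> + \<beta>"
  define c where "c = \<alpha> / s"
  have s0: "s \<noteq> 0" using a by (simp add: s_def)
  have h1: "s * c = \<alpha>" using s0 by (simp add: c_def)
  have h2: "\<alpha> * \<beta> / s = \<alpha> - \<alpha> * c" using s0 by (simp add: c_def s_def field_simps)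
  have "(\<alpha> * \<beta> / s) * X + s * (Y - 2 * c * Z + c * c * X) = (\<alpha> - \<alpha> * c) * X + s * Y - 2 * (s * c) * Z + (s * c) * c * X"
    by (simp add: h2 algebra_simps)
  also have "\<dots> = (\<alpha> - \<alpha> * c) * X + s * Y - 2 * \<alpha> * Z + \<alpha> * c * X" by (simp add: h1)
  also have "\<dots> = \<alpha> * (X - 2 * Z + Y) + \<beta> * Y" by (simp add: s_def algebra_simps)
  finally show ?thesis by (simp add: s_def c_def)
qed

lemma complete_square:
  fixes x y :: "'a::real_inner"
  assumes "0 < \<alpha>" "0 < \<beta>"
  shows "\<alpha> * (norm (x - y))\<^sup>2 + \<beta> * (norm y)\<^sup>2
     = (\<alpha> * \<beta> / (\<alpha> + \<beta>)) * (norm x)\<^sup>2 + (\<alpha> + \<beta>) * (norm (y - (\<alpha> / (\<alpha> + \<beta>)) *\<^sub>R x))\<^sup>2"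
proof -
  have s: "\<alpha> + \<beta> \<noteq> 0" using assms by simp
  define c where "c = \<alpha> / (\<alpha> + \<beta>)"
  have e1: "(norm (x - y))\<^sup>2 = inner x x - 2 * inner x y + inner y y"
    unfolding power2_norm_eq_inner by (simp add: inner_diff_left inner_diff_right inner_commute)
  have e2: "(norm (y - c *\<^sub>R x))\<^sup>2 = inner y y - 2 * c * inner x y + c * c * inner x x"
    unfolding power2_norm_eq_inner
    by (simp add: inner_diff_left inner_diff_right inner_commute algebra_simps)
  have e3: "(norm x)\<^sup>2 = inner x x" "(norm y)\<^sup>2 = inner y y"
    by (simp_all add: power2_norm_eq_inner)
  show ?thesis unfolding c_def[symmetric] e1 e2 e3 unfolding c_def
    by (rule sq_real[OF assms])
qed

lemma gauss_conv:
  fixes x :: "'a::euclidean_space"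
  assumes a: "0 < \<alpha>" "0 < \<beta>"
  shows "(\<integral>\<^sup>+y. ennreal (exp (- \<alpha> * (norm (x - y))\<^sup>2) * exp (- \<beta> * (norm y)\<^sup>2)) \<partial>lborel)
     = ennreal (exp (- (\<alpha> * \<beta> / (\<alpha> + \<beta>)) * (norm x)\<^sup>2) * (\<alpha> + \<beta>) powr (- real DIM('a) / 2)) * KG TYPE('a)"
proof -
  let ?z = "(\<alpha> / (\<alpha> + \<beta>)) *\<^sub>R x"
  have "(\<integral>\<^sup>+y. ennreal (exp (- \<alpha> * (norm (x - y))\<^sup>2) * exp (- \<beta> * (norm y)\<^sup>2)) \<partial>lborel)
      = (\<integral>\<^sup>+y. ennreal (exp (- (\<alpha> * \<beta> / (\<alpha> + \<beta>)) * (norm x)\<^sup>2)) * ennreal (exp (- (\<alpha> + \<beta>) * (norm (y - ?z))\<^sup>2)) \<partial>lborel)"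
  proof (rule nn_integral_cong)
    fix y :: 'a
    have "exp (- \<alpha> * (norm (x - y))\<^sup>2) * exp (- \<beta> * (norm y)\<^sup>2)
        = exp (- (\<alpha> * (norm (x - y))\<^sup>2 + \<beta> * (norm y)\<^sup>2))"
      by (simp add: exp_add[symmetric])
    also have "\<dots> = exp (- (\<alpha> * \<beta> / (\<alpha> + \<beta>)) * (norm x)\<^sup>2) * exp (- (\<alpha> + \<beta>) * (norm (y - ?z))\<^sup>2)"
      unfolding complete_square[OF a] by (simp add: exp_add[symmetric] algebra_simps)
    finally show "ennreal (exp (- \<alpha> * (norm (x - y))\<^sup>2) * exp (- \<beta> * (norm y)\<^sup>2)) =
        ennreal (exp (- (\<alpha> * \<beta> / (\<alpha> + \<beta>)) * (norm x)\<^sup>2)) * ennreal (exp (- (\<alpha> + \<beta>) * (norm (y - ?z))\<^sup>2))"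
      by (simp add: ennreal_mult)
  qed
  also have "\<dots> = ennreal (exp (- (\<alpha> * \<beta> / (\<alpha> + \<beta>)) * (norm x)\<^sup>2)) * (ennreal ((\<alpha> + \<beta>) powr (- real DIM('a) / 2)) * KG TYPE('a))"
  proof -
    have p: "0 < \<alpha> + \<beta>" using a by simp
    have m: "(\<lambda>y. ennreal (exp (- (\<alpha> + \<beta>) * (norm (y - ?z))\<^sup>2))) \<in> borel_measurable lborel"
      by measurable
    show ?thesis by (subst nn_integral_cmult[OF m]) (simp only: gauss_affine[OF p])
  qed
  also have "\<dots> = ennreal (exp (- (\<alpha> * \<beta> / (\<alpha> + \<beta>)) * (norm x)\<^sup>2) * (\<alpha> + \<beta>) powr (- real DIM('a) / 2)) * KG TYPE('a)"
    by (simp add: ennreal_mult mult_ac)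
  finally show ?thesis .
qed


definition dG :: "'a::euclidean_space \<Rightarrow> real \<Rightarrow> 'a \<Rightarrow> real" where
  "dG a \<tau> v = heat_kernel \<tau> v * (- (inner v a) / (2 * \<tau>))"

lemma norm_plus_scale_sq:
  fixes w a :: "'a::real_inner"
  shows "(norm (w + e *\<^sub>R a))\<^sup>2 = (norm w)\<^sup>2 + 2 * e * inner w a + e\<^sup>2 * (norm a)\<^sup>2"
  unfolding power2_norm_eq_inner
  by (simp add: inner_add_left inner_add_right inner_commute power2_eq_square algebra_simps)

lemma hk_deriv:
  fixes w a :: "'a::euclidean_space"
  assumes tau: "0 < \<tau>"
  shows "((\<lambda>e. heat_kernel \<tau> (w + e *\<^sub>R a)) has_real_derivative dG a \<tau> (w + \<theta> *\<^sub>R a)) (at \<theta>)"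
proof -
  define Ck where "Ck = (4 * pi * \<tau>) powr (- real DIM('a) / 2)"
  have eq: "(\<lambda>e. heat_kernel \<tau> (w + e *\<^sub>R a)) =
      (\<lambda>e. Ck * exp (- ((norm w)\<^sup>2 + 2 * e * inner w a + e\<^sup>2 * (norm a)\<^sup>2) / (4 * \<tau>)))"
    by (simp add: heat_kernel_def Ck_def norm_plus_scale_sq)
  have "((\<lambda>e. Ck * exp (- ((norm w)\<^sup>2 + 2 * e * inner w a + e\<^sup>2 * (norm a)\<^sup>2) / (4 * \<tau>))) has_real_derivative
       Ck * (exp (- ((norm w)\<^sup>2 + 2 * \<theta> * inner w a + \<theta>\<^sup>2 * (norm a)\<^sup>2) / (4 * \<tau>)) *
          (- (2 * inner w a + 2 * \<theta> * (norm a)\<^sup>2) / (4 * \<tau>)))) (at \<theta>)"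
    using tau by (auto intro!: derivative_eq_intros simp: field_simps)
  moreover have "Ck * (exp (- ((norm w)\<^sup>2 + 2 * \<theta> * inner w a + \<theta>\<^sup>2 * (norm a)\<^sup>2) / (4 * \<tau>)) *
          (- (2 * inner w a + 2 * \<theta> * (norm a)\<^sup>2) / (4 * \<tau>))) = dG a \<tau> (w + \<theta> *\<^sub>R a)"
  proof -
    have "inner (w + \<theta> *\<^sub>R a) a = inner w a + \<theta> * (norm a)\<^sup>2"
      by (simp add: inner_add_left power2_norm_eq_inner)
    then show ?thesis using tau
      by (simp add: dG_def heat_kernel_def Ck_def norm_plus_scale_sq field_simps)
  qed
  ultimately show ?thesis unfolding eq by simp
qed

lemma mvt_bound:
  fixes f f' :: "real \<Rightarrow> real"
  assumes d: "\<And>\<theta>. (f has_real_derivative f' \<theta>) (at \<theta>)"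
    and b: "\<And>\<theta>. \<bar>\<theta>\<bar> \<le> 1 \<Longrightarrow> \<bar>f' \<theta>\<bar> \<le> B" and e: "\<bar>e\<bar> \<le> 1"
  shows "\<bar>f e - f 0\<bar> \<le> B * \<bar>e\<bar>"
proof -
  have cont: "continuous_on S f" for S
    using d by (meson DERIV_isCont continuous_at_imp_continuous_on)
  have dif: "f differentiable (at x)" for x using d by (auto simp: real_differentiable_def)
  consider "e = 0" | "0 < e" | "e < 0" by linarith
  then show ?thesis
  proof cases
    case 1 then show ?thesis by simp
  next
    case 2
    from MVT[OF 2 cont dif] obtain l z where z: "0 < z" "z < e" "DERIV f z :> l" "f e - f 0 = (e - 0) * l"
      by blast
    have "l = f' z" using DERIV_unique[OF z(3) d] .
    moreover have "\<bar>f' z\<bar> \<le> B" using b z e by auto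
    ultimately show ?thesis using z 2 by (simp add: abs_mult mult.commute)
  next
    case 3
    from MVT[OF 3 cont dif] obtain l z where z: "e < z" "z < 0" "DERIV f z :> l" "f 0 - f e = (0 - e) * l"
      by blast
    have "l = f' z" using DERIV_unique[OF z(3) d] .
    moreover have "\<bar>f' z\<bar> \<le> B" using b z e by auto
    ultimately have lb: "\<bar>l\<bar> \<le> B" by simp
    have "f e - f 0 = e * l" using z(4) by (simp add: algebra_simps)
    then have "\<bar>f e - f 0\<bar> = \<bar>l\<bar> * \<bar>e\<bar>" by (simp add: abs_mult mult.commute)
    also have "\<dots> \<le> B * \<bar>e\<bar>" using lb by (rule mult_right_mono) simp
    finally show ?thesis .
  qed
qed

lemma sqrt_bound_exp:
  assumes "0 < \<tau>" "0 \<le> r"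
  shows "r * exp (- r\<^sup>2 / (8 * \<tau>)) \<le> sqrt (2 * \<tau>)"
proof -
  define u where "u = r / sqrt (8 * \<tau>)"
  have s8: "sqrt (8 * \<tau>) = 2 * sqrt (2 * \<tau>)"
  proof -
    have "sqrt (8 * \<tau>) = sqrt (4 * (2 * \<tau>))" by simp
    also have "\<dots> = sqrt 4 * sqrt (2 * \<tau>)" by (rule real_sqrt_mult)
    finally show ?thesis by simp
  qed
  have pos: "0 < sqrt (2 * \<tau>)" using assms by simp
  have u2: "u\<^sup>2 = r\<^sup>2 / (8 * \<tau>)" using assms by (simp add: u_def power_divide)
  have "(u - 1)\<^sup>2 = u\<^sup>2 - 2 * u + 1" by (simp add: power2_diff)
  moreover have "0 \<le> (u - 1)\<^sup>2" by simp
  ultimately have "2 * u \<le> 1 + u\<^sup>2" by linarith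
  also have "\<dots> \<le> exp (u\<^sup>2)" by (rule exp_ge_add_one_self)
  finally have "2 * u \<le> exp (r\<^sup>2 / (8 * \<tau>))" by (simp add: u2)
  moreover have "2 * u = r / sqrt (2 * \<tau>)" using pos by (simp add: u_def s8)
  ultimately have "r \<le> sqrt (2 * \<tau>) * exp (r\<^sup>2 / (8 * \<tau>))"
    using pos by (simp add: divide_le_eq mult.commute)
  then have "r * exp (- r\<^sup>2 / (8 * \<tau>)) \<le> sqrt (2 * \<tau>) * exp (r\<^sup>2 / (8 * \<tau>)) * exp (- r\<^sup>2 / (8 * \<tau>))"
    by (rule mult_right_mono) simp
  also have "\<dots> = sqrt (2 * \<tau>)" by (simp add: mult.assoc exp_add[symmetric])
  finally show ?thesis .
qed


lemma Cauchy_abs: "\<bar>inner (v::'a::real_inner) a\<bar> \<le> norm v * norm a"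
  by (rule Cauchy_Schwarz_ineq2)

lemma dG_bound:
  fixes a v :: "'a::euclidean_space"
  assumes tau: "0 < \<tau>"
  shows "\<bar>dG a \<tau> v\<bar> \<le> norm a * ((4 * pi * \<tau>) powr (- real DIM('a) / 2) * sqrt (2 * \<tau>) / (2 * \<tau>))
            * exp (- (norm v)\<^sup>2 / (8 * \<tau>))"
proof -
  define Ck where "Ck = (4 * pi * \<tau>) powr (- real DIM('a) / 2)"
  have Ck: "0 \<le> Ck" by (simp add: Ck_def)
  have e: "exp (- (norm v)\<^sup>2 / (4 * \<tau>)) = exp (- (norm v)\<^sup>2 / (8 * \<tau>)) * exp (- (norm v)\<^sup>2 / (8 * \<tau>))"
    by (simp add: exp_add[symmetric])
  have "\<bar>dG a \<tau> v\<bar> = Ck * exp (- (norm v)\<^sup>2 / (4 * \<tau>)) * \<bar>inner v a\<bar> / (2 * \<tau>)"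
    using tau by (simp add: dG_def heat_kernel_def Ck_def abs_mult)
  also have "\<dots> \<le> Ck * exp (- (norm v)\<^sup>2 / (4 * \<tau>)) * (norm v * norm a) / (2 * \<tau>)"
    using tau Ck by (intro divide_right_mono mult_left_mono Cauchy_abs) auto
  also have "\<dots> = (Ck * norm a / (2 * \<tau>)) * exp (- (norm v)\<^sup>2 / (8 * \<tau>)) * (norm v * exp (- (norm v)\<^sup>2 / (8 * \<tau>)))"
    unfolding e by (simp add: field_simps)
  also have "\<dots> \<le> (Ck * norm a / (2 * \<tau>)) * exp (- (norm v)\<^sup>2 / (8 * \<tau>)) * sqrt (2 * \<tau>)"
    using tau Ck by (intro mult_left_mono sqrt_bound_exp) auto
  also have "\<dots> = norm a * (Ck * sqrt (2 * \<tau>) / (2 * \<tau>)) * exp (- (norm v)\<^sup>2 / (8 * \<tau>))"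
    by (simp add: field_simps)
  finally show ?thesis by (simp add: Ck_def)
qed

lemma norm_sq_split:
  fixes w u :: "'a::real_normed_vector"
  shows "(norm w)\<^sup>2 \<le> 2 * (norm u)\<^sup>2 + 2 * (norm (w - u))\<^sup>2"
proof -
  have "norm w \<le> norm u + norm (w - u)" by (metis add.commute diff_add_cancel norm_triangle_ineq)
  then have "(norm w)\<^sup>2 \<le> (norm u + norm (w - u))\<^sup>2" by (simp add: power_mono)
  also have "\<dots> \<le> 2 * (norm u)\<^sup>2 + 2 * (norm (w - u))\<^sup>2"
    by (simp add: power2_sum) (smt (verit) sum_squares_bound)
  finally show ?thesis .
qed

lemma dG_bound2:
  fixes a w :: "'a::euclidean_space"
  assumes tau: "0 < \<tau>" and th: "\<bar>\<theta>\<bar> \<le> 1"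
  shows "\<bar>dG a \<tau> (w + \<theta> *\<^sub>R a)\<bar> \<le> norm a * ((4 * pi * \<tau>) powr (- real DIM('a) / 2) * sqrt (2 * \<tau>) / (2 * \<tau>))
            * exp ((norm a)\<^sup>2 / (8 * \<tau>)) * exp (- (norm w)\<^sup>2 / (16 * \<tau>))"
proof -
  define C where "C = norm a * ((4 * pi * \<tau>) powr (- real DIM('a) / 2) * sqrt (2 * \<tau>) / (2 * \<tau>))"
  have C: "0 \<le> C" using tau by (simp add: C_def)
  have "(norm w)\<^sup>2 \<le> 2 * (norm (w + \<theta> *\<^sub>R a))\<^sup>2 + 2 * (norm (w - (w + \<theta> *\<^sub>R a)))\<^sup>2"
    by (rule norm_sq_split)
  also have "norm (w - (w + \<theta> *\<^sub>R a)) = \<bar>\<theta>\<bar> * norm a" by simp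
  also have "(\<bar>\<theta>\<bar> * norm a)\<^sup>2 \<le> (norm a)\<^sup>2"
  proof -
    have "\<bar>\<theta>\<bar> * norm a \<le> norm a" using th by (simp add: mult_left_le_one_le)
    then show ?thesis by (simp add: power_mono)
  qed
  finally have key: "(norm w)\<^sup>2 \<le> 2 * (norm (w + \<theta> *\<^sub>R a))\<^sup>2 + 2 * (norm a)\<^sup>2" by simp
  have "- (norm (w + \<theta> *\<^sub>R a))\<^sup>2 / (8 * \<tau>) \<le> (norm a)\<^sup>2 / (8 * \<tau>) + - (norm w)\<^sup>2 / (16 * \<tau>)"
    using key tau by (simp add: field_simps)
  then have "exp (- (norm (w + \<theta> *\<^sub>R a))\<^sup>2 / (8 * \<tau>)) \<le> exp ((norm a)\<^sup>2 / (8 * \<tau>)) * exp (- (norm w)\<^sup>2 / (16 * \<tau>))"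
    by (simp add: exp_add[symmetric])
  then have "C * exp (- (norm (w + \<theta> *\<^sub>R a))\<^sup>2 / (8 * \<tau>)) \<le> C * (exp ((norm a)\<^sup>2 / (8 * \<tau>)) * exp (- (norm w)\<^sup>2 / (16 * \<tau>)))"
    using C by (rule mult_left_mono)
  with dG_bound[OF tau, of a "w + \<theta> *\<^sub>R a"] show ?thesis by (simp add: C_def mult.assoc)
qed


lemma KG_fin: "KG TYPE('a::euclidean_space) < \<infinity>"
  unfolding KG_def by (rule gauss_fin)

lemma integrable_gauss:
  fixes z :: "'a::euclidean_space"
  assumes c: "0 < c"
  shows "integrable lborel (\<lambda>y. exp (- c * (norm (y - z))\<^sup>2))"
proof -
  have "(\<integral>\<^sup>+y. ennreal (norm (exp (- c * (norm (y - z))\<^sup>2))) \<partial>lborel) < \<infinity>"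
    using gauss_affine[OF c, of z] KG_fin[where 'a='a] by (simp add: ennreal_mult_less_top)
  then show ?thesis by (simp add: integrable_iff_bounded)
qed

lemma hk_meas[measurable]: "(\<lambda>y. heat_kernel \<tau> (y::'a::euclidean_space)) \<in> borel_measurable borel"
  unfolding heat_kernel_def by measurable

lemma hk_eq: "heat_kernel \<tau> (v::'a::euclidean_space) =
   (4 * pi * \<tau>) powr (- real DIM('a) / 2) * exp (- (1 / (4 * \<tau>)) * (norm v)\<^sup>2)"
  by (simp add: heat_kernel_def)

lemma integrable_hk_g:
  fixes g :: "'a::euclidean_space \<Rightarrow> real"
  assumes tau: "0 < \<tau>" and gm: "g \<in> borel_measurable lborel" and gb: "\<And>y. \<bar>g y\<bar> \<le> Bg"
  shows "integrable lborel (\<lambda>y. heat_kernel \<tau> (z - y) * g y)"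
proof (rule Bochner_Integration.integrable_bound)
  define Ck where "Ck = (4 * pi * \<tau>) powr (- real DIM('a) / 2)"
  have Ck: "0 \<le> Ck" by (simp add: Ck_def)
  show "integrable lborel (\<lambda>y. Ck * Bg * exp (- (1 / (4 * \<tau>)) * (norm (y - z))\<^sup>2))"
    using tau by (intro integrable_mult_right integrable_gauss) auto
  show "(\<lambda>y. heat_kernel \<tau> (z - y) * g y) \<in> borel_measurable lborel" using gm by measurable
  show "AE y in lborel. norm (heat_kernel \<tau> (z - y) * g y) \<le> norm (Ck * Bg * exp (- (1 / (4 * \<tau>)) * (norm (y - z))\<^sup>2))"
  proof (rule AE_I2)
    fix y
    have B: "0 \<le> Bg" using gb[of y] by linarith
    have "norm (heat_kernel \<tau> (z - y) * g y) = Ck * exp (- (1 / (4 * \<tau>)) * (norm (y - z))\<^sup>2) * \<bar>g y\<bar>"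
      by (simp add: hk_eq Ck_def abs_mult norm_minus_commute)
    also have "\<dots> \<le> Ck * exp (- (1 / (4 * \<tau>)) * (norm (y - z))\<^sup>2) * Bg"
      using Ck gb by (intro mult_left_mono) auto
    finally show "norm (heat_kernel \<tau> (z - y) * g y) \<le> norm (Ck * Bg * exp (- (1 / (4 * \<tau>)) * (norm (y - z))\<^sup>2))"
      using Ck B by (simp add: mult_ac)
  qed
qed

lemma heat_deriv:
  fixes g :: "'a::euclidean_space \<Rightarrow> real" and a x :: 'a
  assumes tau: "0 < \<tau>" and gm: "g \<in> borel_measurable lborel" and gb: "\<And>y. \<bar>g y\<bar> \<le> Bg"
  shows "((\<lambda>e. heat \<tau> g (x + e *\<^sub>R a)) has_real_derivative (\<integral>y. dG a \<tau> (x - y) * g y \<partial>lborel)) (at 0)"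
proof -
  define C where "C = norm a * ((4 * pi * \<tau>) powr (- real DIM('a) / 2) * sqrt (2 * \<tau>) / (2 * \<tau>))
            * exp ((norm a)\<^sup>2 / (8 * \<tau>))"
  have C: "0 \<le> C" using tau by (simp add: C_def)
  have B: "0 \<le> Bg" using gb[of 0] by linarith
  define F where "F e = heat \<tau> g (x + e *\<^sub>R a)" for e
  have F: "F e = (\<integral>y. heat_kernel \<tau> (x + e *\<^sub>R a - y) * g y \<partial>lborel)" for e
    by (simp add: F_def heat_def)
  have dGm: "(\<lambda>y. dG a \<tau> (x - y) * g y) \<in> borel_measurable lborel"
    using gm unfolding dG_def by measurable
  show ?thesis
    unfolding F_def[symmetric] DERIV_def tendsto_at_iff_sequentially
  proof (intro allI impI)
    fix X :: "nat \<Rightarrow> real"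
    assume X0: "\<forall>i. X i \<in> UNIV - {0}" and Xl: "X \<longlonglongrightarrow> 0"
    define s where "s i y = (heat_kernel \<tau> (x + X i *\<^sub>R a - y) - heat_kernel \<tau> (x - y)) / X i * g y" for i y
    have sm: "s i \<in> borel_measurable lborel" for i
      using gm unfolding s_def by measurable
    have int_s: "(F (X i) - F 0) / X i = (\<integral>y. s i y \<partial>lborel)" for i
    proof -
      have i1: "integrable lborel (\<lambda>y. heat_kernel \<tau> (x + X i *\<^sub>R a - y) * g y)"
        by (rule integrable_hk_g[OF tau gm gb])
      have i2: "integrable lborel (\<lambda>y. heat_kernel \<tau> (x - y) * g y)"
        by (rule integrable_hk_g[OF tau gm gb])
      have "(\<integral>y. s i y \<partial>lborel) = (\<integral>y. (heat_kernel \<tau> (x + X i *\<^sub>R a - y) * g y - heat_kernel \<tau> (x - y) * g y) / X i \<partial>lborel)"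
        by (intro Bochner_Integration.integral_cong) (auto simp: s_def field_simps)
      also have "\<dots> = (\<integral>y. (heat_kernel \<tau> (x + X i *\<^sub>R a - y) * g y - heat_kernel \<tau> (x - y) * g y) \<partial>lborel) / X i"
        by (rule integral_divide_zero)
      also have "\<dots> = (F (X i) - F 0) / X i"
        using i1 i2 by (simp add: F)
      finally show ?thesis by simp
    qed
    have lim: "(\<lambda>i. s i y) \<longlonglongrightarrow> dG a \<tau> (x - y) * g y" for y
    proof -
      have "((\<lambda>e. heat_kernel \<tau> ((x - y) + e *\<^sub>R a)) has_real_derivative dG a \<tau> ((x - y) + 0 *\<^sub>R a)) (at 0)"
        by (rule hk_deriv[OF tau])
      then have "((\<lambda>h. (heat_kernel \<tau> ((x - y) + (0 + h) *\<^sub>R a) - heat_kernel \<tau> ((x - y) + 0 *\<^sub>R a)) / h)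
           \<longlongrightarrow> dG a \<tau> (x - y)) (at 0)"
        unfolding DERIV_def by simp
      then have "((\<lambda>h. (heat_kernel \<tau> ((x - y) + (0 + h) *\<^sub>R a) - heat_kernel \<tau> ((x - y) + 0 *\<^sub>R a)) / h) \<circ> X)
           \<longlonglongrightarrow> dG a \<tau> (x - y)"
        using X0 Xl unfolding tendsto_at_iff_sequentially by blast
      then have "(\<lambda>i. (heat_kernel \<tau> (x + X i *\<^sub>R a - y) - heat_kernel \<tau> (x - y)) / X i) \<longlonglongrightarrow> dG a \<tau> (x - y)"
        by (simp add: o_def algebra_simps)
      then show ?thesis unfolding s_def by (rule tendsto_mult_right)
    qed
    obtain N where N: "\<And>i. N \<le> i \<Longrightarrow> \<bar>X i\<bar> \<le> 1"
    proof -
      have "eventually (\<lambda>i. dist (X i) 0 < 1) sequentially"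
        using Xl by (rule tendstoD) simp
      then obtain N where "\<And>i. N \<le> i \<Longrightarrow> dist (X i) 0 < 1" by (auto simp: eventually_sequentially)
      then show ?thesis using that by fastforce
    qed
    define w where "w y = C * Bg * exp (- (1 / (16 * \<tau>)) * (norm (y - x))\<^sup>2)" for y
    have wi: "integrable lborel w"
      unfolding w_def using tau by (intro integrable_mult_right integrable_gauss) auto
    have bnd: "norm (s (i + N) y) \<le> w y" for i y
    proof -
      let ?h = "\<lambda>e. heat_kernel \<tau> ((x - y) + e *\<^sub>R a)"
      have "\<bar>?h (X (i + N)) - ?h 0\<bar> \<le> (C * exp (- (norm (x - y))\<^sup>2 / (16 * \<tau>))) * \<bar>X (i + N)\<bar>"
      proof (rule mvt_bound)
        show "(?h has_real_derivative dG a \<tau> ((x - y) + \<theta> *\<^sub>R a)) (at \<theta>)" for \<theta>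
          by (rule hk_deriv[OF tau])
        show "\<bar>dG a \<tau> ((x - y) + \<theta> *\<^sub>R a)\<bar> \<le> C * exp (- (norm (x - y))\<^sup>2 / (16 * \<tau>))" if "\<bar>\<theta>\<bar> \<le> 1" for \<theta>
          using dG_bound2[OF tau that, of a "x - y"] by (simp add: C_def)
        show "\<bar>X (i + N)\<bar> \<le> 1" by (rule N) simp
      qed
      moreover have "X (i + N) \<noteq> 0" using X0 by auto
      ultimately have "\<bar>(?h (X (i + N)) - ?h 0) / X (i + N)\<bar> \<le> C * exp (- (norm (x - y))\<^sup>2 / (16 * \<tau>))"
        by (simp add: divide_le_eq abs_divide)
      then have "\<bar>(?h (X (i + N)) - ?h 0) / X (i + N)\<bar> * \<bar>g y\<bar> \<le> C * exp (- (norm (x - y))\<^sup>2 / (16 * \<tau>)) * Bg"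
        using gb[of y] C by (intro mult_mono) auto
      moreover have "s (i + N) y = (?h (X (i + N)) - ?h 0) / X (i + N) * g y"
        by (simp add: s_def algebra_simps)
      ultimately show ?thesis
        by (simp add: w_def abs_mult norm_minus_commute mult_ac)
    qed
    have "(\<lambda>i. integral\<^sup>L lborel (s (i + N))) \<longlonglongrightarrow> integral\<^sup>L lborel (\<lambda>y. dG a \<tau> (x - y) * g y)"
      by (rule integral_dominated_convergence[where w=w])
         (use dGm sm wi lim bnd in \<open>auto intro!: LIMSEQ_ignore_initial_segment\<close>)
    then have "(\<lambda>i. integral\<^sup>L lborel (s i)) \<longlonglongrightarrow> integral\<^sup>L lborel (\<lambda>y. dG a \<tau> (x - y) * g y)"
      by (rule LIMSEQ_offset)
    then show "((\<lambda>h. (F (0 + h) - F 0) / h) \<circ> X) \<longlonglongrightarrow> (\<integral>y. dG a \<tau> (x - y) * g y \<partial>lborel)"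
      by (simp add: o_def int_s)
  qed
qed

lemma dir_deriv_heat:
  fixes g :: "'a::euclidean_space \<Rightarrow> real"
  assumes tau: "0 < \<tau>" and gm: "g \<in> borel_measurable lborel" and gb: "\<And>y. \<bar>g y\<bar> \<le> Bg"
  shows "dir_deriv a (heat \<tau> g) x = (\<integral>y. dG a \<tau> (x - y) * g y \<partial>lborel)"
  unfolding dir_deriv_def using heat_deriv[OF tau gm gb] by (rule DERIV_imp_deriv)


lemma abs_integral_le_nn:
  fixes f :: "'b \<Rightarrow> real"
  shows "ennreal \<bar>\<integral>y. f y \<partial>M\<bar> \<le> (\<integral>\<^sup>+y. ennreal \<bar>f y\<bar> \<partial>M)"
proof (cases "integrable M f")
  case True
  then show ?thesis using integral_norm_bound_ennreal[OF True] by simp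
next
  case False
  then show ?thesis by (simp add: not_integrable_integral_eq)
qed

definition Phi :: "real \<Rightarrow> 'a::euclidean_space \<Rightarrow> real" where
  "Phi t x = t powr (- real DIM('a) / 2) * exp (- (norm x)\<^sup>2 / (8 * t))"

definition KC :: "'a::euclidean_space itself \<Rightarrow> real" where
  "KC _ = (4 * pi) powr (- real DIM('a) / 2) * 8 powr (real DIM('a) / 2) / sqrt 2 * enn2real (KG TYPE('a))"

lemma KC_nonneg: "0 \<le> KC TYPE('a::euclidean_space)"
  by (simp add: KC_def)

lemma Phi_nonneg: "0 \<le> Phi t x" by (simp add: Phi_def)

lemma powr_algebra:
  fixes n p \<tau> s :: real
  assumes tau: "0 < \<tau>" and s: "0 < s" and p: "0 < p"
  shows "(4 * pi * \<tau>) powr (- n / 2) * (sqrt (2 * \<tau>) / (2 * \<tau>)) * s powr (- n * p / 2)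
          * (1 / (8 * \<tau>) + p / (8 * s)) powr (- n / 2)
     = (4 * pi) powr (- n / 2) * 8 powr (n / 2) / sqrt 2 * \<tau> powr (-1/2) * s powr (- n * (p - 1) / 2)
          * (s + p * \<tau>) powr (- n / 2)"
proof -
  have ab: "1 / (8 * \<tau>) + p / (8 * s) = (s + p * \<tau>) / (8 * \<tau> * s)"
    using tau s by (simp add: field_simps)
  have sp: "0 < s + p * \<tau>" using tau s p by (simp add: add_pos_pos)
  have sq1: "sqrt (2 * \<tau>) / (2 * \<tau>) = (2 * \<tau>) powr (-1/2)"
  proof -
    have "sqrt (2 * \<tau>) = (2 * \<tau>) powr (1/2)" using tau by (simp add: powr_half_sqrt)
    then have "sqrt (2 * \<tau>) / (2 * \<tau>) = (2 * \<tau>) powr (1/2) / (2 * \<tau>) powr 1" using tau by simp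
    also have "\<dots> = (2 * \<tau>) powr (1/2 - 1)" by (rule powr_diff[symmetric])
    finally show ?thesis by simp
  qed
  have sq2: "sqrt 2 = 2 powr (1/2)" by (simp add: powr_half_sqrt)
  have l8: "ln (8::real) = 3 * ln 2"
  proof -
    have "(8::real) = 2 ^ 3" by simp
    then show ?thesis by (metis ln_realpow zero_less_numeral of_nat_numeral)
  qed
  have l4: "ln (4::real) = 2 * ln 2"
  proof -
    have "(4::real) = 2 ^ 2" by simp
    then show ?thesis by (metis ln_realpow zero_less_numeral of_nat_numeral)
  qed
  show ?thesis
    unfolding ab sq1 sq2 using tau s sp
    apply (simp add: powr_def ln_mult ln_div exp_add[symmetric] exp_diff[symmetric] l8 l4 algebra_simps)
    apply (simp add: field_simps)
    done
qed

lemma KG_eq: "KG TYPE('a::euclidean_space) = ennreal (enn2real (KG TYPE('a)))"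
  using KG_fin[where 'a='a] by (simp add: ennreal_enn2real_if)

lemma conv_bound:
  fixes w :: "'a::euclidean_space \<Rightarrow> real" and a x :: 'a
  assumes tau: "0 < \<tau>" and s: "0 < s" and p: "1 \<le> p" and B: "0 \<le> B"
    and wb: "\<And>y. \<bar>w y\<bar> \<le> B * s powr (- real DIM('a) * p / 2) * exp (- (p / (8 * s)) * (norm y)\<^sup>2)"
  shows "\<bar>\<integral>y. dG a \<tau> (x - y) * w y \<partial>lborel\<bar>
     \<le> KC TYPE('a) * norm a * B * \<tau> powr (-1/2) * s powr (- real DIM('a) * (p - 1) / 2) * Phi (\<tau> + s) x"
proof -
  define n where "n = real DIM('a)"
  define \<alpha> where "\<alpha> = 1 / (8 * \<tau>)"
  define \<beta> where "\<beta> = p / (8 * s)"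
  define Cd where "Cd = norm a * ((4 * pi * \<tau>) powr (- n / 2) * sqrt (2 * \<tau>) / (2 * \<tau>))"
  define S where "S = s powr (- n * p / 2)"
  define KGr where "KGr = enn2real (KG TYPE('a))"
  have al: "0 < \<alpha>" using tau by (simp add: \<alpha>_def)
  have be: "0 < \<beta>" using s p by (simp add: \<beta>_def)
  have Cd: "0 \<le> Cd" using tau by (simp add: Cd_def)
  have S: "0 \<le> S" by (simp add: S_def)
  have KGr: "0 \<le> KGr" by (simp add: KGr_def)
  have pw: "\<bar>dG a \<tau> (x - y) * w y\<bar> \<le> (Cd * B * S) * (exp (- \<alpha> * (norm (x - y))\<^sup>2) * exp (- \<beta> * (norm y)\<^sup>2))" for y
  proof -
    have "\<bar>dG a \<tau> (x - y)\<bar> \<le> Cd * exp (- \<alpha> * (norm (x - y))\<^sup>2)"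
      using dG_bound[OF tau, of a "x - y"] by (simp add: Cd_def \<alpha>_def n_def)
    moreover have "\<bar>w y\<bar> \<le> B * S * exp (- \<beta> * (norm y)\<^sup>2)"
      using wb[of y] by (simp add: S_def \<beta>_def n_def)
    ultimately have "\<bar>dG a \<tau> (x - y)\<bar> * \<bar>w y\<bar> \<le> (Cd * exp (- \<alpha> * (norm (x - y))\<^sup>2)) * (B * S * exp (- \<beta> * (norm y)\<^sup>2))"
      using Cd by (intro mult_mono) auto
    then show ?thesis by (simp add: abs_mult mult_ac)
  qed
  have "ennreal \<bar>\<integral>y. dG a \<tau> (x - y) * w y \<partial>lborel\<bar> \<le> (\<integral>\<^sup>+y. ennreal \<bar>dG a \<tau> (x - y) * w y\<bar> \<partial>lborel)"
    by (rule abs_integral_le_nn)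
  also have "\<dots> \<le> (\<integral>\<^sup>+y. ennreal (Cd * B * S) * ennreal (exp (- \<alpha> * (norm (x - y))\<^sup>2) * exp (- \<beta> * (norm y)\<^sup>2)) \<partial>lborel)"
  proof (intro nn_integral_mono)
    fix y
    have e: "ennreal (Cd * B * S) * ennreal (exp (- \<alpha> * (norm (x - y))\<^sup>2) * exp (- \<beta> * (norm y)\<^sup>2))
        = ennreal ((Cd * B * S) * (exp (- \<alpha> * (norm (x - y))\<^sup>2) * exp (- \<beta> * (norm y)\<^sup>2)))"
      using Cd B S by (intro ennreal_mult[symmetric]) auto
    show "ennreal \<bar>dG a \<tau> (x - y) * w y\<bar> \<le> ennreal (Cd * B * S) * ennreal (exp (- \<alpha> * (norm (x - y))\<^sup>2) * exp (- \<beta> * (norm y)\<^sup>2))"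
      unfolding e by (rule ennreal_leI[OF pw])
  qed
  also have "\<dots> = ennreal (Cd * B * S) * (\<integral>\<^sup>+y. ennreal (exp (- \<alpha> * (norm (x - y))\<^sup>2) * exp (- \<beta> * (norm y)\<^sup>2)) \<partial>lborel)"
    by (rule nn_integral_cmult) measurable
  also have "\<dots> = ennreal (Cd * B * S) * (ennreal (exp (- (\<alpha> * \<beta> / (\<alpha> + \<beta>)) * (norm x)\<^sup>2) * (\<alpha> + \<beta>) powr (- n / 2)) * ennreal KGr)"
    unfolding gauss_conv[OF al be] n_def KGr_def by (subst KG_eq) rule
  also have "\<dots> = ennreal (Cd * B * S * (exp (- (\<alpha> * \<beta> / (\<alpha> + \<beta>)) * (norm x)\<^sup>2) * (\<alpha> + \<beta>) powr (- n / 2)) * KGr)"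
    using Cd B S KGr by (simp add: ennreal_mult[symmetric] mult_ac)
  finally have I: "\<bar>\<integral>y. dG a \<tau> (x - y) * w y \<partial>lborel\<bar>
      \<le> Cd * B * S * (exp (- (\<alpha> * \<beta> / (\<alpha> + \<beta>)) * (norm x)\<^sup>2) * (\<alpha> + \<beta>) powr (- n / 2)) * KGr"
    using Cd B S KGr by (subst (asm) ennreal_le_iff) auto
  have eq: "Cd * S * (\<alpha> + \<beta>) powr (- n / 2) = norm a * ((4 * pi) powr (- n / 2) * 8 powr (n / 2) / sqrt 2) * \<tau> powr (-1/2) * s powr (- n * (p - 1) / 2)
          * (s + p * \<tau>) powr (- n / 2)"
  proof -
    have pp: "0 < p" using p by simp
    note pa = powr_algebra[OF tau s pp, of n]
    have "Cd * S * (\<alpha> + \<beta>) powr (- n / 2) = norm a * ((4 * pi * \<tau>) powr (- n / 2) * (sqrt (2 * \<tau>) / (2 * \<tau>)) * s powr (- n * p / 2)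
          * (1 / (8 * \<tau>) + p / (8 * s)) powr (- n / 2))"
      unfolding Cd_def S_def \<alpha>_def \<beta>_def by (simp add: mult_ac)
    also have "\<dots> = norm a * ((4 * pi) powr (- n / 2) * 8 powr (n / 2) / sqrt 2 * \<tau> powr (-1/2) * s powr (- n * (p - 1) / 2)
          * (s + p * \<tau>) powr (- n / 2))" unfolding pa ..
    finally show ?thesis by (simp add: mult_ac)
  qed
  have m1: "(s + p * \<tau>) powr (- n / 2) \<le> (\<tau> + s) powr (- n / 2)"
    using tau s p by (intro powr_mono2') (auto simp: n_def intro: add_pos_pos)
  have g: "\<alpha> * \<beta> / (\<alpha> + \<beta>) = p / (8 * (s + p * \<tau>))"
    using tau s p by (simp add: \<alpha>_def \<beta>_def field_simps)
  have m2: "exp (- (\<alpha> * \<beta> / (\<alpha> + \<beta>)) * (norm x)\<^sup>2) \<le> exp (- (norm x)\<^sup>2 / (8 * (\<tau> + s)))"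
  proof -
    have "1 / (8 * (\<tau> + s)) \<le> p / (8 * (s + p * \<tau>))"
    proof -
      have d: "8 * (s + p * \<tau>) \<le> 8 * (p * (\<tau> + s))"
        using mult_right_mono[OF p, of s] s by (simp add: algebra_simps)
      have "1 / (8 * (\<tau> + s)) = p / (8 * (p * (\<tau> + s)))" using p by simp
      also have "\<dots> \<le> p / (8 * (s + p * \<tau>))"
        using d p tau s by (intro divide_left_mono) (auto intro!: mult_pos_pos add_pos_pos)
      finally show ?thesis .
    qed
    then have "1 / (8 * (\<tau> + s)) * (norm x)\<^sup>2 \<le> p / (8 * (s + p * \<tau>)) * (norm x)\<^sup>2"
      by (rule mult_right_mono) simp
    then show ?thesis unfolding g by simp
  qed
  have "Cd * B * S * (exp (- (\<alpha> * \<beta> / (\<alpha> + \<beta>)) * (norm x)\<^sup>2) * (\<alpha> + \<beta>) powr (- n / 2)) * KGr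
      = B * KGr * (Cd * S * (\<alpha> + \<beta>) powr (- n / 2)) * exp (- (\<alpha> * \<beta> / (\<alpha> + \<beta>)) * (norm x)\<^sup>2)"
    by (simp add: mult_ac)
  also have "\<dots> = (B * KGr * (norm a * ((4 * pi) powr (- n / 2) * 8 powr (n / 2) / sqrt 2) * \<tau> powr (-1/2) * s powr (- n * (p - 1) / 2)))
       * ((s + p * \<tau>) powr (- n / 2) * exp (- (\<alpha> * \<beta> / (\<alpha> + \<beta>)) * (norm x)\<^sup>2))"
    unfolding eq by (simp add: mult_ac)
  also have "\<dots> \<le> (B * KGr * (norm a * ((4 * pi) powr (- n / 2) * 8 powr (n / 2) / sqrt 2) * \<tau> powr (-1/2) * s powr (- n * (p - 1) / 2)))
       * ((\<tau> + s) powr (- n / 2) * exp (- (norm x)\<^sup>2 / (8 * (\<tau> + s))))"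
    using B KGr m1 m2 by (intro mult_left_mono mult_mono) auto
  also have "\<dots> = KC TYPE('a) * norm a * B * \<tau> powr (-1/2) * s powr (- real DIM('a) * (p - 1) / 2) * Phi (\<tau> + s) x"
    by (simp add: KC_def Phi_def n_def KGr_def mult_ac)
  finally show ?thesis using I by linarith
qed


locale fsetup =
  fixes f :: "real \<Rightarrow> real" and L p :: real
  assumes fc: "continuous_on UNIV f"
    and fL: "\<And>\<xi> \<eta>. \<bar>f \<xi> - f \<eta>\<bar> \<le> L * (\<bar>\<xi>\<bar> powr (p - 1) + \<bar>\<eta>\<bar> powr (p - 1)) * \<bar>\<xi> - \<eta>\<bar>"
    and L: "0 \<le> L" and f0: "f 0 = 0" and p: "1 < p"
begin

lemma powr_pm1: "0 < (x::real) \<Longrightarrow> x powr (p - 1) * x = x powr p"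
  by (simp add: powr_mult_base mult.commute)

lemma f_meas[measurable]: "f \<in> borel_measurable borel"
  using fc by (rule borel_measurable_continuous_onI)

lemma f_bound: "\<bar>f \<xi>\<bar> \<le> L * \<bar>\<xi>\<bar> powr p"
proof (cases "\<xi> = 0")
  case True then show ?thesis using f0 by simp
next
  case False
  have "\<bar>f \<xi>\<bar> = \<bar>f \<xi> - f 0\<bar>" using f0 by simp
  also have "\<dots> \<le> L * (\<bar>\<xi>\<bar> powr (p - 1) + \<bar>0\<bar> powr (p - 1)) * \<bar>\<xi> - 0\<bar>" by (rule fL)
  also have "\<dots> = L * (\<bar>\<xi>\<bar> powr (p - 1) * \<bar>\<xi>\<bar>)" using False by simp
  also have "\<dots> = L * \<bar>\<xi>\<bar> powr p" using False by (simp add: powr_pm1)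
  finally show ?thesis .
qed

lemma Phi_pos: "0 < s \<Longrightarrow> 0 < Phi s y" by (simp add: Phi_def)

lemma Phi_pow:
  assumes s: "0 < s"
  shows "Phi s (y::'a::euclidean_space) powr p = s powr (- real DIM('a) * p / 2) * exp (- (p / (8 * s)) * (norm y)\<^sup>2)"
  using s by (simp add: Phi_def powr_mult powr_powr exp_powr_real mult_ac)

lemma Phi_le: "0 < s \<Longrightarrow> Phi s y \<le> s powr (- real DIM('a) / 2)" for y :: "'a::euclidean_space"
  by (simp add: Phi_def)

lemma fU_bound:
  assumes s: "0 < s" and m: "0 \<le> m" and Ub: "\<bar>u\<bar> \<le> m * Phi s (y::'a::euclidean_space)"
  shows "\<bar>f u\<bar> \<le> (L * m powr p) * s powr (- real DIM('a) * p / 2) * exp (- (p / (8 * s)) * (norm y)\<^sup>2)"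
proof -
  have "\<bar>f u\<bar> \<le> L * \<bar>u\<bar> powr p" by (rule f_bound)
  also have "\<dots> \<le> L * (m * Phi s y) powr p"
    using Ub p L by (intro mult_left_mono powr_mono2) auto
  also have "\<dots> = (L * m powr p) * (Phi s y powr p)" by (simp add: powr_mult)
  also have "\<dots> = (L * m powr p) * s powr (- real DIM('a) * p / 2) * exp (- (p / (8 * s)) * (norm y)\<^sup>2)"
    using s by (simp add: Phi_pow)
  finally show ?thesis .
qed

lemma fU_diff_bound:
  assumes s: "0 < s" and m: "0 \<le> m" and d: "0 \<le> d"
    and U1: "\<bar>u1\<bar> \<le> m * Phi s (y::'a::euclidean_space)" and U2: "\<bar>u2\<bar> \<le> m * Phi s y"
    and D: "\<bar>u1 - u2\<bar> \<le> d * Phi s y"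
  shows "\<bar>f u1 - f u2\<bar> \<le> (2 * L * m powr (p - 1) * d) * s powr (- real DIM('a) * p / 2) * exp (- (p / (8 * s)) * (norm y)\<^sup>2)"
proof -
  have P: "0 < Phi s y" using s by (rule Phi_pos)
  have a1: "\<bar>u1\<bar> powr (p - 1) \<le> (m * Phi s y) powr (p - 1)" using U1 p by (intro powr_mono2) auto
  have a2: "\<bar>u2\<bar> powr (p - 1) \<le> (m * Phi s y) powr (p - 1)" using U2 p by (intro powr_mono2) auto
  have "\<bar>f u1 - f u2\<bar> \<le> L * (\<bar>u1\<bar> powr (p - 1) + \<bar>u2\<bar> powr (p - 1)) * \<bar>u1 - u2\<bar>" by (rule fL)
  also have "\<dots> \<le> L * (2 * (m * Phi s y) powr (p - 1)) * (d * Phi s y)"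
    using a1 a2 D L by (intro mult_mono mult_left_mono) auto
  also have "\<dots> = (2 * L * m powr (p - 1) * d) * (Phi s y powr (p - 1) * Phi s y)"
    using P by (simp add: powr_mult mult_ac)
  also have "\<dots> = (2 * L * m powr (p - 1) * d) * Phi s y powr p"
    using P by (simp add: powr_pm1)
  also have "\<dots> = (2 * L * m powr (p - 1) * d) * s powr (- real DIM('a) * p / 2) * exp (- (p / (8 * s)) * (norm y)\<^sup>2)"
    using s by (simp add: Phi_pow)
  finally show ?thesis .
qed

lemma integrable_dG_g:
  fixes g :: "'a::euclidean_space \<Rightarrow> real"
  assumes tau: "0 < \<tau>" and gm: "g \<in> borel_measurable lborel" and gb: "\<And>y. \<bar>g y\<bar> \<le> Bg"
  shows "integrable lborel (\<lambda>y. dG a \<tau> (x - y) * g y)"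
proof (rule Bochner_Integration.integrable_bound)
  define Cd where "Cd = norm a * ((4 * pi * \<tau>) powr (- real DIM('a) / 2) * sqrt (2 * \<tau>) / (2 * \<tau>))"
  have Cd: "0 \<le> Cd" using tau by (simp add: Cd_def)
  have B: "0 \<le> Bg" using gb[of 0] by linarith
  show "integrable lborel (\<lambda>y. Cd * Bg * exp (- (1 / (8 * \<tau>)) * (norm (y - x))\<^sup>2))"
    using tau by (intro integrable_mult_right integrable_gauss) auto
  show "(\<lambda>y. dG a \<tau> (x - y) * g y) \<in> borel_measurable lborel" using gm unfolding dG_def by measurable
  show "AE y in lborel. norm (dG a \<tau> (x - y) * g y) \<le> norm (Cd * Bg * exp (- (1 / (8 * \<tau>)) * (norm (y - x))\<^sup>2))"
  proof (rule AE_I2)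
    fix y
    have "\<bar>dG a \<tau> (x - y)\<bar> \<le> Cd * exp (- (1 / (8 * \<tau>)) * (norm (y - x))\<^sup>2)"
      using dG_bound[OF tau, of a "x - y"] by (simp add: Cd_def norm_minus_commute)
    then have "\<bar>dG a \<tau> (x - y)\<bar> * \<bar>g y\<bar> \<le> Cd * exp (- (1 / (8 * \<tau>)) * (norm (y - x))\<^sup>2) * Bg"
      using gb[of y] Cd by (intro mult_mono) auto
    then show "norm (dG a \<tau> (x - y) * g y) \<le> norm (Cd * Bg * exp (- (1 / (8 * \<tau>)) * (norm (y - x))\<^sup>2))"
      using Cd B by (simp add: abs_mult mult_ac)
  qed
qed

lemma term_formula:
  fixes U :: "'a::euclidean_space \<Rightarrow> real"
  assumes tau: "0 < \<tau>" and s: "0 < s" and m: "0 \<le> m"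
    and Um: "U \<in> borel_measurable lborel" and Ub: "\<And>y. \<bar>U y\<bar> \<le> m * Phi s y"
  shows "dir_deriv a (heat \<tau> (\<lambda>y. f (U y))) x = (\<integral>y. dG a \<tau> (x - y) * f (U y) \<partial>lborel)"
proof (rule dir_deriv_heat[OF tau])
  show "(\<lambda>y. f (U y)) \<in> borel_measurable lborel" using Um by measurable
  show "\<bar>f (U y)\<bar> \<le> (L * m powr p) * s powr (- real DIM('a) * p / 2)" for y
  proof -
    have "\<bar>f (U y)\<bar> \<le> (L * m powr p) * s powr (- real DIM('a) * p / 2) * exp (- (p / (8 * s)) * (norm y)\<^sup>2)"
      by (rule fU_bound[OF s m Ub])
    also have "\<dots> \<le> (L * m powr p) * s powr (- real DIM('a) * p / 2) * 1"
      using L s p by (intro mult_left_mono) auto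
    finally show ?thesis by simp
  qed
qed

lemma term_bound:
  fixes U :: "'a::euclidean_space \<Rightarrow> real"
  assumes tau: "0 < \<tau>" and s: "0 < s" and m: "0 \<le> m"
    and Um: "U \<in> borel_measurable lborel" and Ub: "\<And>y. \<bar>U y\<bar> \<le> m * Phi s y"
  shows "\<bar>dir_deriv a (heat \<tau> (\<lambda>y. f (U y))) x\<bar>
     \<le> KC TYPE('a) * norm a * (L * m powr p) * \<tau> powr (-1/2) * s powr (- real DIM('a) * (p - 1) / 2) * Phi (\<tau> + s) x"
  unfolding term_formula[OF tau s m Um Ub]
  by (rule conv_bound[OF tau s]) (use p L fU_bound[OF s m Ub] in auto)

lemma term_diff_bound:
  fixes U1 U2 :: "'a::euclidean_space \<Rightarrow> real"
  assumes tau: "0 < \<tau>" and s: "0 < s" and m: "0 \<le> m" and d: "0 \<le> d"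
    and U1m: "U1 \<in> borel_measurable lborel" and U1b: "\<And>y. \<bar>U1 y\<bar> \<le> m * Phi s y"
    and U2m: "U2 \<in> borel_measurable lborel" and U2b: "\<And>y. \<bar>U2 y\<bar> \<le> m * Phi s y"
    and D: "\<And>y. \<bar>U1 y - U2 y\<bar> \<le> d * Phi s y"
  shows "\<bar>dir_deriv a (heat \<tau> (\<lambda>y. f (U1 y))) x - dir_deriv a (heat \<tau> (\<lambda>y. f (U2 y))) x\<bar>
     \<le> KC TYPE('a) * norm a * (2 * L * m powr (p - 1) * d) * \<tau> powr (-1/2) * s powr (- real DIM('a) * (p - 1) / 2) * Phi (\<tau> + s) x"
proof -
  have bnd: "\<bar>f (U y)\<bar> \<le> (L * m powr p) * s powr (- real DIM('a) * p / 2)"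
    if "\<And>y. \<bar>U y\<bar> \<le> m * Phi s y" for U :: "'a \<Rightarrow> real" and y
  proof -
    have "\<bar>f (U y)\<bar> \<le> (L * m powr p) * s powr (- real DIM('a) * p / 2) * exp (- (p / (8 * s)) * (norm y)\<^sup>2)"
      by (rule fU_bound[OF s m that])
    also have "\<dots> \<le> (L * m powr p) * s powr (- real DIM('a) * p / 2) * 1"
      using L s p by (intro mult_left_mono) auto
    finally show ?thesis by simp
  qed
  have i1: "integrable lborel (\<lambda>y. dG a \<tau> (x - y) * f (U1 y))"
    by (rule integrable_dG_g[OF tau _ bnd]) (use U1m U1b in auto)
  have i2: "integrable lborel (\<lambda>y. dG a \<tau> (x - y) * f (U2 y))"
    by (rule integrable_dG_g[OF tau _ bnd]) (use U2m U2b in auto)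
  have "dir_deriv a (heat \<tau> (\<lambda>y. f (U1 y))) x - dir_deriv a (heat \<tau> (\<lambda>y. f (U2 y))) x
      = (\<integral>y. dG a \<tau> (x - y) * (f (U1 y) - f (U2 y)) \<partial>lborel)"
    unfolding term_formula[OF tau s m U1m U1b] term_formula[OF tau s m U2m U2b]
    using i1 i2 by (simp add: right_diff_distrib)
  also have "\<bar>\<dots>\<bar> \<le> KC TYPE('a) * norm a * (2 * L * m powr (p - 1) * d) * \<tau> powr (-1/2) * s powr (- real DIM('a) * (p - 1) / 2) * Phi (\<tau> + s) x"
    by (rule conv_bound[OF tau s]) (use p L m d fU_diff_bound[OF s m d U1b U2b D] in auto)
  finally show ?thesis .
qed

end


lemma duhamel_cong:
  assumes "\<And>s. s \<in> S \<Longrightarrow> U s = U' s"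
  shows "duhamel a f U S t x = duhamel a f U' S t x"
  unfolding duhamel_def set_lebesgue_integral_def
  by (intro Bochner_Integration.integral_cong) (auto simp: assms indicator_def)

lemma duh_generic_bound:
  fixes D :: "real \<Rightarrow> real"
  assumes S: "S \<subseteq> {0<..<t}" and t: "0 < t" and b: "0 \<le> \<beta>" "\<beta> < 1" and c: "0 \<le> c"
    and Db: "\<And>s. s \<in> S \<Longrightarrow> \<bar>D s\<bar> \<le> c * ((t - s) powr (-1/2) * s powr (-\<beta>))"
  shows "\<bar>\<integral>s. indicator S s * D s \<partial>lborel\<bar> \<le> c * (Beta (1 - \<beta>) (1/2) * t powr (1/2 - \<beta>))"
proof -
  have "ennreal \<bar>\<integral>s. indicator S s * D s \<partial>lborel\<bar> \<le> (\<integral>\<^sup>+s. ennreal \<bar>indicator S s * D s\<bar> \<partial>lborel)"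
    by (rule abs_integral_le_nn)
  also have "\<dots> \<le> (\<integral>\<^sup>+s. ennreal c * ennreal (indicator {0<..<t} s * ((t - s) powr (-1/2) * s powr (-\<beta>))) \<partial>lborel)"
  proof (intro nn_integral_mono)
    fix s
    show "ennreal \<bar>indicator S s * D s\<bar> \<le> ennreal c * ennreal (indicator {0<..<t} s * ((t - s) powr (-1/2) * s powr (-\<beta>)))"
    proof (cases "s \<in> S")
      case True
      then have "s \<in> {0<..<t}" using S by auto
      then have "ennreal \<bar>indicator S s * D s\<bar> \<le> ennreal (c * (indicator {0<..<t} s * ((t - s) powr (-1/2) * s powr (-\<beta>))))"
        using Db[OF True] True by (intro ennreal_leI) (simp add: indicator_def)
      then show ?thesis using c by (simp add: ennreal_mult)
    next
      case False then show ?thesis by (simp add: indicator_def)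
    qed
  qed
  also have "\<dots> = ennreal c * (\<integral>\<^sup>+s. ennreal (indicator {0<..<t} s * ((t - s) powr (-1/2) * s powr (-\<beta>))) \<partial>lborel)"
    by (rule nn_integral_cmult) measurable
  also have "\<dots> = ennreal c * ennreal (Beta (1 - \<beta>) (1/2) * t powr (1/2 - \<beta>))"
    using time_int[OF b t] by simp
  also have "\<dots> = ennreal (c * (Beta (1 - \<beta>) (1/2) * t powr (1/2 - \<beta>)))"
    using c b by (simp add: ennreal_mult[symmetric] Beta_def)
  finally show ?thesis using c b by (subst (asm) ennreal_le_iff) (auto simp: Beta_def)
qed

lemma integrable_time:
  fixes D :: "real \<Rightarrow> real"
  assumes S: "S \<subseteq> {0<..<t}" and t: "0 < t" and b: "0 \<le> \<beta>" "\<beta> < 1" and c: "0 \<le> c"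
    and Dm: "(\<lambda>s. indicator S s * D s) \<in> borel_measurable lborel"
    and Db: "\<And>s. s \<in> S \<Longrightarrow> \<bar>D s\<bar> \<le> c * ((t - s) powr (-1/2) * s powr (-\<beta>))"
  shows "integrable lborel (\<lambda>s. indicator S s * D s)"
proof (rule Bochner_Integration.integrable_bound)
  have "(\<integral>\<^sup>+s. ennreal (norm (c * (indicator {0<..<t} s * ((t - s) powr (-1/2) * s powr (-\<beta>))))) \<partial>lborel)
      = (\<integral>\<^sup>+s. ennreal c * ennreal (indicator {0<..<t} s * ((t - s) powr (-1/2) * s powr (-\<beta>))) \<partial>lborel)"
    using c by (intro nn_integral_cong) (simp add: abs_mult ennreal_mult indicator_def)
  also have "\<dots> = ennreal c * (\<integral>\<^sup>+s. ennreal (indicator {0<..<t} s * ((t - s) powr (-1/2) * s powr (-\<beta>))) \<partial>lborel)"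
    by (rule nn_integral_cmult) measurable
  also have "\<dots> < \<infinity>" using time_int[OF b t] by (simp add: ennreal_mult_less_top)
  finally have fin: "(\<integral>\<^sup>+s. ennreal (norm (c * (indicator {0<..<t} s * ((t - s) powr (-1/2) * s powr (-\<beta>))))) \<partial>lborel) < \<infinity>" .
  show "integrable lborel (\<lambda>s. c * (indicator {0<..<t} s * ((t - s) powr (-1/2) * s powr (-\<beta>))))"
    by (rule integrableI_bounded[OF _ fin]) measurable
  show "(\<lambda>s. indicator S s * D s) \<in> borel_measurable lborel" by (rule Dm)
  show "AE s in lborel. norm (indicator S s * D s) \<le> norm (c * (indicator {0<..<t} s * ((t - s) powr (-1/2) * s powr (-\<beta>))))"
  proof (rule AE_I2)
    fix s
    show "norm (indicator S s * D s) \<le> norm (c * (indicator {0<..<t} s * ((t - s) powr (-1/2) * s powr (-\<beta>))))"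
    proof (cases "s \<in> S")
      case True
      then have "s \<in> {0<..<t}" using S by auto
      then show ?thesis using Db[OF True] True c by (simp add: indicator_def)
    next
      case False then show ?thesis by (simp add: indicator_def)
    qed
  qed
qed

context fsetup
begin

lemma duhamel_bound:
  fixes U :: "real \<Rightarrow> 'a::euclidean_space \<Rightarrow> real" and x :: 'a
  assumes S: "S \<subseteq> {0<..<t}" and t: "0 < t" and m: "0 \<le> m"
    and sig: "real DIM('a) * (p - 1) / 2 < 1"
    and Um: "\<And>s. s \<in> S \<Longrightarrow> U s \<in> borel_measurable lborel"
    and Ub: "\<And>s y. s \<in> S \<Longrightarrow> \<bar>U s y\<bar> \<le> m * Phi s y"
  shows "\<bar>duhamel a f U S t x\<bar> \<le> (KC TYPE('a) * norm a * (L * m powr p) * Phi t x)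
           * (Beta (1 - real DIM('a) * (p - 1) / 2) (1/2) * t powr (1/2 - real DIM('a) * (p - 1) / 2))"
proof -
  have "\<bar>\<integral>s. indicator S s * dir_deriv a (heat (t - s) (\<lambda>y. f (U s y))) x \<partial>lborel\<bar>
     \<le> (KC TYPE('a) * norm a * (L * m powr p) * Phi t x)
           * (Beta (1 - real DIM('a) * (p - 1) / 2) (1/2) * t powr (1/2 - real DIM('a) * (p - 1) / 2))"
  proof (rule duh_generic_bound[OF S t])
    show "0 \<le> real DIM('a) * (p - 1) / 2" using p by simp
    show "real DIM('a) * (p - 1) / 2 < 1" by (rule sig)
    show "0 \<le> KC TYPE('a) * norm a * (L * m powr p) * Phi t x"
      using L by (intro mult_nonneg_nonneg KC_nonneg Phi_nonneg) auto
    fix s assume sS: "s \<in> S"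
    then have s: "0 < s" "s < t" using S by auto
    have tau: "0 < t - s" using s by simp
    have "\<bar>dir_deriv a (heat (t - s) (\<lambda>y. f (U s y))) x\<bar>
        \<le> KC TYPE('a) * norm a * (L * m powr p) * (t - s) powr (-1/2) * s powr (- real DIM('a) * (p - 1) / 2) * Phi (t - s + s) x"
      by (rule term_bound[OF tau s(1) m Um[OF sS] Ub[OF sS]])
    then show "\<bar>dir_deriv a (heat (t - s) (\<lambda>y. f (U s y))) x\<bar>
        \<le> KC TYPE('a) * norm a * (L * m powr p) * Phi t x * ((t - s) powr (-1/2) * s powr (- (real DIM('a) * (p - 1) / 2)))"
      by (simp add: mult_ac)
  qed
  then show ?thesis unfolding duhamel_def set_lebesgue_integral_def by simp
qed

lemma F_meas:
  fixes U :: "real \<Rightarrow> 'a::euclidean_space \<Rightarrow> real" and x a :: 'a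
  assumes JM[measurable]: "(\<lambda>z. U (fst z) (snd z)) \<in> borel_measurable (lborel \<Otimes>\<^sub>M lborel)"
  shows "(\<lambda>s. \<integral>y. dG a (t - s) (x - y) * f (U s y) \<partial>lborel) \<in> borel_measurable lborel"
  unfolding dG_def heat_kernel_def by measurable

lemma U_sec_meas:
  fixes U :: "real \<Rightarrow> 'a::euclidean_space \<Rightarrow> real"
  assumes JM[measurable]: "(\<lambda>z. U (fst z) (snd z)) \<in> borel_measurable (lborel \<Otimes>\<^sub>M lborel)"
  shows "U s \<in> borel_measurable lborel"
proof -
  have "(\<lambda>y. (\<lambda>z. U (fst z) (snd z)) (s, y)) \<in> borel_measurable lborel" by measurable
  then show ?thesis by simp
qed

lemma term_time_bound:
  fixes U :: "real \<Rightarrow> 'a::euclidean_space \<Rightarrow> real" and x :: 'a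
  assumes s: "0 < s" "s < t" and m: "0 \<le> m"
    and Um: "U s \<in> borel_measurable lborel" and Ub: "\<And>y. \<bar>U s y\<bar> \<le> m * Phi s y"
  shows "\<bar>dir_deriv a (heat (t - s) (\<lambda>y. f (U s y))) x\<bar>
        \<le> KC TYPE('a) * norm a * (L * m powr p) * Phi t x * ((t - s) powr (-1/2) * s powr (- (real DIM('a) * (p - 1) / 2)))"
proof -
  have tau: "0 < t - s" using s by simp
  have "\<bar>dir_deriv a (heat (t - s) (\<lambda>y. f (U s y))) x\<bar>
      \<le> KC TYPE('a) * norm a * (L * m powr p) * (t - s) powr (-1/2) * s powr (- real DIM('a) * (p - 1) / 2) * Phi (t - s + s) x"
    by (rule term_bound[OF tau s(1) m Um Ub])
  then show ?thesis by (simp add: mult_ac)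
qed

lemma duhamel_integrable:
  fixes U :: "real \<Rightarrow> 'a::euclidean_space \<Rightarrow> real" and x :: 'a
  assumes S: "S \<subseteq> {0<..<t}" and Sm[measurable]: "S \<in> sets borel" and t: "0 < t" and m: "0 \<le> m"
    and sig: "real DIM('a) * (p - 1) / 2 < 1"
    and JM[measurable]: "(\<lambda>z. U (fst z) (snd z)) \<in> borel_measurable (lborel \<Otimes>\<^sub>M lborel)"
    and Ub: "\<And>s y. s \<in> S \<Longrightarrow> \<bar>U s y\<bar> \<le> m * Phi s y"
  shows "integrable lborel (\<lambda>s. indicator S s * dir_deriv a (heat (t - s) (\<lambda>y. f (U s y))) x)"
proof (rule integrable_time[OF S t])
  show "0 \<le> real DIM('a) * (p - 1) / 2" using p by simp
  show "real DIM('a) * (p - 1) / 2 < 1" by (rule sig)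
  show "0 \<le> KC TYPE('a) * norm a * (L * m powr p) * Phi t x"
    using L by (intro mult_nonneg_nonneg KC_nonneg Phi_nonneg) auto
  have eq: "(\<lambda>s. indicator S s * dir_deriv a (heat (t - s) (\<lambda>y. f (U s y))) x)
      = (\<lambda>s. indicator S s * (\<integral>y. dG a (t - s) (x - y) * f (U s y) \<partial>lborel))"
  proof
    fix s show "indicator S s * dir_deriv a (heat (t - s) (\<lambda>y. f (U s y))) x
      = indicator S s * (\<integral>y. dG a (t - s) (x - y) * f (U s y) \<partial>lborel)"
    proof (cases "s \<in> S")
      case True
      then have s: "0 < s" "s < t" using S by auto
      show ?thesis using term_formula[of "t - s" s m "U s" a x] s m Ub[OF True] U_sec_meas[OF JM] by simp
    qed simp
  qed
  have Fm: "(\<lambda>s. \<integral>y. dG a (t - s) (x - y) * f (U s y) \<partial>lborel) \<in> borel_measurable lborel"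
    by (rule F_meas[OF JM])
  show "(\<lambda>s. indicator S s * dir_deriv a (heat (t - s) (\<lambda>y. f (U s y))) x) \<in> borel_measurable lborel"
    unfolding eq using Fm by measurable
  fix s assume sS: "s \<in> S"
  then have s: "0 < s" "s < t" using S by auto
  show "\<bar>dir_deriv a (heat (t - s) (\<lambda>y. f (U s y))) x\<bar>
        \<le> KC TYPE('a) * norm a * (L * m powr p) * Phi t x * ((t - s) powr (-1/2) * s powr (- (real DIM('a) * (p - 1) / 2)))"
    by (rule term_time_bound[where U=U, OF s m U_sec_meas[OF JM] Ub[OF sS]])
qed

lemma duhamel_diff_bound:
  fixes U1 U2 :: "real \<Rightarrow> 'a::euclidean_space \<Rightarrow> real" and x :: 'a
  assumes S: "S \<subseteq> {0<..<t}" and Sm[measurable]: "S \<in> sets borel" and t: "0 < t"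
    and m: "0 \<le> m" and d: "0 \<le> d" and g: "0 \<le> \<gamma>"
    and sig: "real DIM('a) * (p - 1) / 2 + \<gamma> < 1"
    and JM1[measurable]: "(\<lambda>z. U1 (fst z) (snd z)) \<in> borel_measurable (lborel \<Otimes>\<^sub>M lborel)"
    and JM2[measurable]: "(\<lambda>z. U2 (fst z) (snd z)) \<in> borel_measurable (lborel \<Otimes>\<^sub>M lborel)"
    and U1b: "\<And>s y. s \<in> S \<Longrightarrow> \<bar>U1 s y\<bar> \<le> m * Phi s y"
    and U2b: "\<And>s y. s \<in> S \<Longrightarrow> \<bar>U2 s y\<bar> \<le> m * Phi s y"
    and Db: "\<And>s y. s \<in> S \<Longrightarrow> \<bar>U1 s y - U2 s y\<bar> \<le> (d * s powr (- \<gamma>)) * Phi s y"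
  shows "\<bar>duhamel a f U1 S t x - duhamel a f U2 S t x\<bar>
     \<le> (KC TYPE('a) * norm a * (2 * L * m powr (p - 1) * d) * Phi t x)
        * (Beta (1 - (real DIM('a) * (p - 1) / 2 + \<gamma>)) (1/2) * t powr (1/2 - (real DIM('a) * (p - 1) / 2 + \<gamma>)))"
proof -
  have sig1: "real DIM('a) * (p - 1) / 2 < 1" using sig g by linarith
  have i1: "integrable lborel (\<lambda>s. indicator S s * dir_deriv a (heat (t - s) (\<lambda>y. f (U1 s y))) x)"
    by (rule duhamel_integrable[OF S Sm t m sig1 JM1 U1b])
  have i2: "integrable lborel (\<lambda>s. indicator S s * dir_deriv a (heat (t - s) (\<lambda>y. f (U2 s y))) x)"
    by (rule duhamel_integrable[OF S Sm t m sig1 JM2 U2b])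
  have "duhamel a f U1 S t x - duhamel a f U2 S t x
     = (\<integral>s. indicator S s * (dir_deriv a (heat (t - s) (\<lambda>y. f (U1 s y))) x - dir_deriv a (heat (t - s) (\<lambda>y. f (U2 s y))) x) \<partial>lborel)"
    unfolding duhamel_def set_lebesgue_integral_def using i1 i2
    by (simp add: right_diff_distrib)
  also have "\<bar>\<dots>\<bar> \<le> (KC TYPE('a) * norm a * (2 * L * m powr (p - 1) * d) * Phi t x)
        * (Beta (1 - (real DIM('a) * (p - 1) / 2 + \<gamma>)) (1/2) * t powr (1/2 - (real DIM('a) * (p - 1) / 2 + \<gamma>)))"
  proof (rule duh_generic_bound[OF S t])
    show "0 \<le> real DIM('a) * (p - 1) / 2 + \<gamma>" using p g by simp
    show "real DIM('a) * (p - 1) / 2 + \<gamma> < 1" by (rule sig)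
    show "0 \<le> KC TYPE('a) * norm a * (2 * L * m powr (p - 1) * d) * Phi t x"
      using L d by (intro mult_nonneg_nonneg KC_nonneg Phi_nonneg) auto
    fix s assume sS: "s \<in> S"
    then have s: "0 < s" "s < t" using S by auto
    have tau: "0 < t - s" using s by simp
    have ds: "0 \<le> d * s powr (- \<gamma>)" using d by simp
    have "\<bar>dir_deriv a (heat (t - s) (\<lambda>y. f (U1 s y))) x - dir_deriv a (heat (t - s) (\<lambda>y. f (U2 s y))) x\<bar>
       \<le> KC TYPE('a) * norm a * (2 * L * m powr (p - 1) * (d * s powr (- \<gamma>))) * (t - s) powr (-1/2)
          * s powr (- real DIM('a) * (p - 1) / 2) * Phi (t - s + s) x"
      by (rule term_diff_bound[OF tau s(1) m ds U_sec_meas[OF JM1] U1b[OF sS] U_sec_meas[OF JM2] U2b[OF sS] Db[OF sS]])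
    also have "s powr (- \<gamma>) * s powr (- real DIM('a) * (p - 1) / 2) = s powr (- (real DIM('a) * (p - 1) / 2 + \<gamma>))"
      unfolding powr_add[symmetric] by (rule arg_cong[where f = "(powr) s"]) (simp add: field_simps)
    then have "KC TYPE('a) * norm a * (2 * L * m powr (p - 1) * (d * s powr (- \<gamma>))) * (t - s) powr (-1/2)
          * s powr (- real DIM('a) * (p - 1) / 2) * Phi (t - s + s) x
        = KC TYPE('a) * norm a * (2 * L * m powr (p - 1) * d) * Phi t x * ((t - s) powr (-1/2) * s powr (- (real DIM('a) * (p - 1) / 2 + \<gamma>)))"
      by (simp add: mult_ac)
    finally show "\<bar>dir_deriv a (heat (t - s) (\<lambda>y. f (U1 s y))) x - dir_deriv a (heat (t - s) (\<lambda>y. f (U2 s y))) x\<bar>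
       \<le> KC TYPE('a) * norm a * (2 * L * m powr (p - 1) * d) * Phi t x * ((t - s) powr (-1/2) * s powr (- (real DIM('a) * (p - 1) / 2 + \<gamma>)))" .
  qed
  finally show ?thesis .
qed

lemma duhamel_split:
  fixes U :: "real \<Rightarrow> 'a::euclidean_space \<Rightarrow> real" and x :: 'a
  assumes t: "1 < t" and m: "0 \<le> m"
    and sig: "real DIM('a) * (p - 1) / 2 < 1"
    and JM[measurable]: "(\<lambda>z. U (fst z) (snd z)) \<in> borel_measurable (lborel \<Otimes>\<^sub>M lborel)"
    and Ub: "\<And>s y. s \<in> {0<..<t} \<Longrightarrow> \<bar>U s y\<bar> \<le> m * Phi s y"
  shows "duhamel a f U {0<..<t} t x = duhamel a f U {0<..<1} t x + duhamel a f U {1<..<t} t x"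
proof -
  let ?D = "\<lambda>s. dir_deriv a (heat (t - s) (\<lambda>y. f (U s y))) x"
  have t0: "0 < t" using t by simp
  have i0: "integrable lborel (\<lambda>s. indicator {0<..<t} s * ?D s)"
    by (rule duhamel_integrable[OF _ _ t0 m sig JM]) (use t Ub in auto)
  have i1: "integrable lborel (\<lambda>s. indicator {0<..<1} s * ?D s)"
    by (rule duhamel_integrable[OF _ _ t0 m sig JM]) (use t Ub in auto)
  have i2: "integrable lborel (\<lambda>s. indicator {1<..<t} s * ?D s)"
    by (rule duhamel_integrable[OF _ _ t0 m sig JM]) (use t Ub in auto)
  have "(\<integral>s. indicator {0<..<t} s * ?D s \<partial>lborel) = (\<integral>s. indicator {0<..<1} s * ?D s + indicator {1<..<t} s * ?D s \<partial>lborel)"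
  proof (rule integral_cong_AE)
    show "AE s in lborel. indicator {0<..<t} s * ?D s = indicator {0<..<1} s * ?D s + indicator {1<..<t} s * ?D s"
      using AE_lborel_singleton[of 1] by eventually_elim (use t in \<open>auto simp: indicator_def\<close>)
  qed (use i0 i1 i2 in auto)
  also have "\<dots> = (\<integral>s. indicator {0<..<1} s * ?D s \<partial>lborel) + (\<integral>s. indicator {1<..<t} s * ?D s \<partial>lborel)"
    by (rule Bochner_Integration.integral_add[OF i1 i2])
  finally show ?thesis unfolding duhamel_def set_lebesgue_integral_def by simp
qed

end


lemma Phi_powr_gen:
  assumes s: "0 < s" and r: "0 < r"
  shows "Phi s (y::'a::euclidean_space) powr r = s powr (- real DIM('a) * r / 2) * exp (- (r / (8 * s)) * (norm y)\<^sup>2)"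
  using s by (simp add: Phi_def powr_mult powr_powr exp_powr_real mult_ac)

lemma Lq_fin_bound:
  fixes g :: "'a::euclidean_space \<Rightarrow> real"
  assumes r: "1 \<le> r" and t: "0 < t" and c: "0 \<le> c"
    and gb: "\<And>x. \<bar>g x\<bar> \<le> c * Phi t x"
  shows "ennreal (t powr (real DIM('a) / 2 * (1 - 1 / r))) * Lq_norm (ereal r) g
     \<le> ennreal (c * (((8 / r) powr (real DIM('a) / 2) * enn2real (KG TYPE('a))) powr (1 / r)))"
proof -
  define n where "n = real DIM('a)"
  define K' where "K' = (8 / r) powr (n / 2) * enn2real (KG TYPE('a))"
  have K': "0 \<le> K'" by (simp add: K'_def)
  define J where "J = c powr r * t powr (- n * (r - 1) / 2) * K'"
  have J: "0 \<le> J" using K' by (simp add: J_def)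
  have r0: "0 < r" using r by simp
  have al: "0 < r / (8 * t)" using r t by simp
  define I where "I = (\<integral>\<^sup>+ x. ennreal (\<bar>g x\<bar> powr r) \<partial>lborel)"
  have "I \<le> (\<integral>\<^sup>+ x. ennreal (c powr r * t powr (- n * r / 2)) * ennreal (exp (- (r / (8 * t)) * (norm ((x::'a) - 0))\<^sup>2)) \<partial>lborel)"
    unfolding I_def
  proof (intro nn_integral_mono)
    fix x
    have "\<bar>g x\<bar> powr r \<le> (c * Phi t x) powr r" using gb r by (intro powr_mono2) auto
    also have "\<dots> = c powr r * (t powr (- n * r / 2) * exp (- (r / (8 * t)) * (norm x)\<^sup>2))"
      using Phi_powr_gen[OF t r0, of x] by (simp add: powr_mult n_def)
    finally show "ennreal (\<bar>g x\<bar> powr r) \<le> ennreal (c powr r * t powr (- n * r / 2)) * ennreal (exp (- (r / (8 * t)) * (norm (x - 0))\<^sup>2))"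
      by (simp add: ennreal_mult[symmetric] mult_ac ennreal_leI)
  qed
  also have "\<dots> = ennreal (c powr r * t powr (- n * r / 2)) * (ennreal ((r / (8 * t)) powr (- n / 2)) * KG TYPE('a))"
  proof -
    have m: "(\<lambda>x::'a. ennreal (exp (- (r / (8 * t)) * (norm (x - 0))\<^sup>2))) \<in> borel_measurable lborel"
      by measurable
    show ?thesis by (simp only: nn_integral_cmult[OF m] gauss_affine[OF al] n_def)
  qed
  also have "\<dots> = ennreal J"
  proof -
    have "KG TYPE('a) = ennreal (enn2real (KG TYPE('a)))" by (rule KG_eq)
    moreover have "t powr (- n * r / 2) * (r / (8 * t)) powr (- n / 2) = t powr (- n * (r - 1) / 2) * (8 / r) powr (n / 2)"
      using t r0 by (simp add: powr_def ln_div ln_mult exp_add[symmetric] field_simps)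
    ultimately show ?thesis
      by (simp add: J_def K'_def ennreal_mult[symmetric] mult_ac del: ennreal_enn2real_if) (simp add: ennreal_mult mult_ac)
  qed
  finally have IJ: "I \<le> ennreal J" .
  then have Ifin: "I \<noteq> \<infinity>" by (auto simp: top_unique)
  have "enn2real I \<le> enn2real (ennreal J)" by (rule enn2real_mono[OF IJ]) simp
  then have "enn2real I \<le> J" using J by simp
  then have "enn2real I powr (1 / r) \<le> J powr (1 / r)" using r0 by (intro powr_mono2) auto
  then have Lq: "Lq_norm (ereal r) g \<le> ennreal (J powr (1 / r))"
    unfolding Lq_norm_def using Ifin by (simp add: I_def[symmetric] Let_def ennreal_leI)
  have "ennreal (t powr (n / 2 * (1 - 1 / r))) * Lq_norm (ereal r) g \<le> ennreal (t powr (n / 2 * (1 - 1 / r))) * ennreal (J powr (1 / r))"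
    using Lq by (rule mult_left_mono) simp
  also have "\<dots> = ennreal (c * K' powr (1 / r))"
  proof -
    have "t powr (n / 2 * (1 - 1 / r)) * J powr (1 / r) = c * K' powr (1 / r)"
    proof (cases "c = 0")
      case True then show ?thesis using r0 by (simp add: J_def)
    next
      case False
      then have c0: "0 < c" using c by simp
      have "J powr (1 / r) = (c powr r) powr (1/r) * (t powr (- n * (r - 1) / 2)) powr (1/r) * K' powr (1 / r)"
        by (simp add: J_def powr_mult)
      also have "\<dots> = c * t powr (- n * (r - 1) / (2 * r)) * K' powr (1 / r)"
        using c0 r0 by (simp add: powr_powr)
      finally have "t powr (n / 2 * (1 - 1 / r)) * J powr (1 / r) = (t powr (n / 2 * (1 - 1 / r)) * t powr (- n * (r - 1) / (2 * r))) * c * K' powr (1 / r)"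
        by (simp add: mult_ac)
      also have "t powr (n / 2 * (1 - 1 / r)) * t powr (- n * (r - 1) / (2 * r)) = 1"
        using r0 t by (simp add: powr_add[symmetric] field_simps)
      finally show ?thesis by simp
    qed
    then show ?thesis by (simp add: ennreal_mult[symmetric])
  qed
  finally show ?thesis by (simp add: n_def K'_def)
qed

lemma Lq_inf_bound:
  fixes g :: "'a::euclidean_space \<Rightarrow> real"
  assumes t: "0 < t" and c: "0 \<le> c" and gm: "g \<in> borel_measurable lborel"
    and gb: "\<And>x. \<bar>g x\<bar> \<le> c * Phi t x"
  shows "ennreal (t powr (real DIM('a) / 2)) * Lq_norm \<infinity> g \<le> ennreal c"
proof -
  have "esssup lborel (\<lambda>x. ennreal \<bar>g x\<bar>) \<le> ennreal (c * t powr (- real DIM('a) / 2))"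
  proof (rule esssup_I)
    show "(\<lambda>x. ennreal \<bar>g x\<bar>) \<in> borel_measurable lborel" using gm by measurable
    show "AE x in lborel. ennreal \<bar>g x\<bar> \<le> ennreal (c * t powr (- real DIM('a) / 2))"
    proof (rule AE_I2, rule ennreal_leI)
      fix x
      have e1: "exp (- (norm (x::'a))\<^sup>2 / (8 * t)) \<le> 1" using t by simp
      have "Phi t (x::'a) \<le> t powr (- real DIM('a) / 2)"
        unfolding Phi_def using mult_left_mono[OF e1, of "t powr (- real DIM('a) / 2)"] by simp
      then have "c * Phi t x \<le> c * t powr (- real DIM('a) / 2)" using c by (rule mult_left_mono)
      then show "\<bar>g x\<bar> \<le> c * t powr (- real DIM('a) / 2)" using gb[of x] by linarith
    qed
  qed
  then have "ennreal (t powr (real DIM('a) / 2)) * Lq_norm \<infinity> g \<le> ennreal (t powr (real DIM('a) / 2)) * ennreal (c * t powr (- real DIM('a) / 2))"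
    unfolding Lq_norm_def by (intro mult_left_mono) auto
  also have "\<dots> = ennreal c"
    using t c by (simp add: ennreal_mult[symmetric] powr_minus field_simps)
  finally show ?thesis .
qed


context fsetup
begin

lemma duhamel_JM:
  fixes U :: "real \<Rightarrow> 'a::euclidean_space \<Rightarrow> real" and T :: "real set" and Q :: "real \<Rightarrow> real \<Rightarrow> bool"
  assumes Tm[measurable]: "T \<in> sets borel"
    and Qm[measurable]: "Measurable.pred (lborel \<Otimes>\<^sub>M lborel) (\<lambda>w. Q (fst w) (snd w))"
    and JM[measurable]: "(\<lambda>z. U (fst z) (snd z)) \<in> borel_measurable (lborel \<Otimes>\<^sub>M lborel)"
    and Qt: "\<And>t s. t \<in> T \<Longrightarrow> Q t s \<Longrightarrow> 0 < s \<and> s < t"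
    and Ub: "\<And>t s. t \<in> T \<Longrightarrow> Q t s \<Longrightarrow> \<exists>m\<ge>0. \<forall>y. \<bar>U s y\<bar> \<le> m * Phi s y"
  shows "(\<lambda>z. if fst z \<in> T then duhamel a f U {s. Q (fst z) s} (fst z) (snd z) else 0) \<in> borel_measurable (lborel \<Otimes>\<^sub>M lborel)"
proof -
  have eq: "(\<lambda>z. if fst z \<in> T then duhamel a f U {s. Q (fst z) s} (fst z) (snd z) else 0)
     = (\<lambda>z. if fst z \<in> T then (\<integral>s. (if Q (fst z) s then 1 else 0) * (\<integral>y. dG a (fst z - s) (snd z - y) * f (U s y) \<partial>lborel) \<partial>lborel) else 0)"
  proof
    fix z :: "real \<times> 'a"
    obtain t x where z: "z = (t, x)" by (cases z)
    show "(if fst z \<in> T then duhamel a f U {s. Q (fst z) s} (fst z) (snd z) else 0)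
       = (if fst z \<in> T then (\<integral>s. (if Q (fst z) s then 1 else 0) * (\<integral>y. dG a (fst z - s) (snd z - y) * f (U s y) \<partial>lborel) \<partial>lborel) else 0)"
    proof (cases "t \<in> T")
      case True
      have "duhamel a f U {s. Q t s} t x = (\<integral>s. (if Q t s then 1 else 0) * (\<integral>y. dG a (t - s) (x - y) * f (U s y) \<partial>lborel) \<partial>lborel)"
        unfolding duhamel_def set_lebesgue_integral_def
      proof (intro Bochner_Integration.integral_cong refl)
        fix s
        show "indicator {s. Q t s} s *\<^sub>R dir_deriv a (heat (t - s) (\<lambda>y. f (U s y))) x
            = (if Q t s then 1 else 0) * (\<integral>y. dG a (t - s) (x - y) * f (U s y) \<partial>lborel)"
        proof (cases "Q t s")
          case Q: True
          have s: "0 < s" "s < t" using Qt[OF True Q] by auto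
          obtain m where m: "0 \<le> m" "\<And>y. \<bar>U s y\<bar> \<le> m * Phi s y" using Ub[OF True Q] by blast
          have tau: "0 < t - s" using s by simp
          show ?thesis using term_formula[OF tau s(1) m(1) U_sec_meas[OF JM] m(2)] Q by simp
        qed simp
      qed
      then show ?thesis using True z by simp
    qed (simp add: z)
  qed
  have mQ: "(\<lambda>w::(real \<times> 'a) \<times> real. (fst (fst w), snd w)) \<in> measurable ((lborel \<Otimes>\<^sub>M lborel) \<Otimes>\<^sub>M lborel) (lborel \<Otimes>\<^sub>M lborel)"
    by measurable
  have Q2[measurable]: "Measurable.pred ((lborel \<Otimes>\<^sub>M lborel) \<Otimes>\<^sub>M lborel) (\<lambda>w::(real \<times> 'a) \<times> real. Q (fst (fst w)) (snd w))"
    using measurable_compose[OF mQ Qm] by (simp add: o_def)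
  have JMb: "(\<lambda>z. U (fst z) (snd z)) \<in> borel_measurable (borel \<Otimes>\<^sub>M borel)"
    using JM by (subst measurable_cong_sets[OF sets_pair_measure_cong[OF sets_lborel sets_lborel] refl, symmetric])
  have m2: "(\<lambda>w::((real \<times> 'a) \<times> real) \<times> 'a. (snd (fst w), snd w)) \<in> measurable (((borel \<Otimes>\<^sub>M borel) \<Otimes>\<^sub>M borel) \<Otimes>\<^sub>M borel) (borel \<Otimes>\<^sub>M borel)"
    by measurable
  have mU[measurable]: "(\<lambda>w::((real \<times> 'a) \<times> real) \<times> 'a. U (snd (fst w)) (snd w)) \<in> borel_measurable (((borel \<Otimes>\<^sub>M borel) \<Otimes>\<^sub>M borel) \<Otimes>\<^sub>M borel)"
    using measurable_compose[OF m2 JMb] by (simp add: o_def)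
  have inner: "(\<lambda>w::((real \<times> 'a) \<times> real) \<times> 'a. dG a (fst (fst (fst w)) - snd (fst w)) (snd (fst (fst w)) - snd w) * f (U (snd (fst w)) (snd w)))
      \<in> borel_measurable (((lborel \<Otimes>\<^sub>M lborel) \<Otimes>\<^sub>M lborel) \<Otimes>\<^sub>M lborel)"
    unfolding dG_def heat_kernel_def by measurable
  have I1[measurable]: "(\<lambda>w::(real \<times> 'a) \<times> real. \<integral>y. dG a (fst (fst w) - snd w) (snd (fst w) - y) * f (U (snd w) y) \<partial>lborel)
      \<in> borel_measurable ((lborel \<Otimes>\<^sub>M lborel) \<Otimes>\<^sub>M lborel)"
    by (rule lborel.borel_measurable_lebesgue_integral) (use inner in \<open>simp add: case_prod_beta\<close>)
  have I2: "(\<lambda>z::real \<times> 'a. \<integral>s. (if Q (fst z) s then 1 else 0) * (\<integral>y. dG a (fst z - s) (snd z - y) * f (U s y) \<partial>lborel) \<partial>lborel)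
      \<in> borel_measurable (lborel \<Otimes>\<^sub>M lborel)"
  proof (rule lborel.borel_measurable_lebesgue_integral)
    have "(\<lambda>w::(real \<times> 'a) \<times> real. (if Q (fst (fst w)) (snd w) then 1 else 0) * (\<integral>y. dG a (fst (fst w) - snd w) (snd (fst w) - y) * f (U (snd w) y) \<partial>lborel))
      \<in> borel_measurable ((lborel \<Otimes>\<^sub>M lborel) \<Otimes>\<^sub>M lborel)" by measurable
    then show "(\<lambda>(z, s). (if Q (fst z) s then 1 else 0) * (\<integral>y. dG a (fst z - s) (snd z - y) * f (U s y) \<partial>lborel))
      \<in> borel_measurable ((lborel \<Otimes>\<^sub>M lborel) \<Otimes>\<^sub>M lborel)" by (simp add: case_prod_beta)
  qed
  have Tm2: "{z \<in> space (lborel \<Otimes>\<^sub>M lborel). fst z \<in> (T::real set)} \<in> sets (lborel \<Otimes>\<^sub>M lborel)"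
    by measurable
  show ?thesis unfolding eq using I2 Tm2 by measurable
qed

end


definition restr :: "real set \<Rightarrow> (real \<Rightarrow> 'a \<Rightarrow> real) \<Rightarrow> real \<Rightarrow> 'a \<Rightarrow> real" where
  "restr T U s y = (if s \<in> T then U s y else 0)"

abbreviation JMeas :: "(real \<Rightarrow> 'a::euclidean_space \<Rightarrow> real) \<Rightarrow> bool" where
  "JMeas U \<equiv> (\<lambda>z. U (fst z) (snd z)) \<in> borel_measurable (lborel \<Otimes>\<^sub>M lborel)"

locale mainloc = fsetup f L p for f L p +
  fixes a :: "'a::euclidean_space" and u0 :: "'a \<Rightarrow> real" and K :: nat
  assumes Kpos: "0 < K"
    and p_low: "1 + 1 / real DIM('a) < p"
    and p_up: "p < 1 + real (K + 1) / (real K * real DIM('a))"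
begin

abbreviation "A j \<equiv> Aiter a f u0 j"
definition "b0 = real DIM('a) * (p - 1) / 2"
definition "sig = b0 - 1/2"
definition "m0 = \<bar>mass u0\<bar> * (4 * pi) powr (- real DIM('a) / 2)"
definition "Bt = Beta (1 - b0) (1/2)"
definition "c1 = KC TYPE('a) * norm a * (L * m0 powr p) * Bt"

lemma n_pos: "0 < real DIM('a)" by simp

lemma b0_gt: "1/2 < b0"
proof -
  have "1 / real DIM('a) < p - 1" using p_low by simp
  then have "1 < real DIM('a) * (p - 1)" using n_pos by (simp add: field_simps)
  then show ?thesis by (simp add: b0_def)
qed

lemma sig_pos: "0 < sig" using b0_gt by (simp add: sig_def)

lemma Ksig: "real K * sig < 1/2"
proof -
  have Kp: "0 < real K" using Kpos by simp
  have "p - 1 < real (K + 1) / (real K * real DIM('a))" using p_up by simp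
  then have "real DIM('a) * (p - 1) < real (K + 1) / real K"
    using n_pos Kp by (simp add: field_simps)
  then have "real K * (real DIM('a) * (p - 1)) < real K + 1"
    using Kp by (simp add: field_simps)
  then show ?thesis by (simp add: sig_def b0_def field_simps)
qed

lemma jsig: "j \<le> K \<Longrightarrow> real j * sig < 1/2"
proof -
  assume "j \<le> K"
  then have "real j * sig \<le> real K * sig" using sig_pos by (intro mult_right_mono) auto
  then show ?thesis using Ksig by linarith
qed

lemma b0_lt: "b0 < 1"
  using jsig[of 1] Kpos by (simp add: sig_def)

lemma b0_lt': "real DIM('a) * (p - 1) / 2 < 1" using b0_lt by (simp add: b0_def)

lemma m0_nonneg: "0 \<le> m0" by (simp add: m0_def)

lemma Bt_nonneg: "0 \<le> Bt" using b0_lt by (simp add: Bt_def Beta_def)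

lemma c1_nonneg: "0 \<le> c1"
  using L m0_nonneg Bt_nonneg by (simp add: c1_def KC_nonneg)

lemma A0_bound:
  assumes t: "0 < t"
  shows "\<bar>A0 u0 t x\<bar> \<le> m0 * Phi t x"
proof -
  have "heat_kernel t x = (4 * pi) powr (- real DIM('a) / 2) * t powr (- real DIM('a) / 2) * exp (- (norm x)\<^sup>2 / (4 * t))"
    using t by (simp add: heat_kernel_def powr_mult)
  also have "\<dots> \<le> (4 * pi) powr (- real DIM('a) / 2) * t powr (- real DIM('a) / 2) * exp (- (norm x)\<^sup>2 / (8 * t))"
    using t by (intro mult_left_mono) (auto simp: divide_simps)
  finally have "heat_kernel t x \<le> (4 * pi) powr (- real DIM('a) / 2) * Phi t x" by (simp add: Phi_def mult_ac)
  moreover have "0 \<le> heat_kernel t x" by (simp add: heat_kernel_def)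
  ultimately have "\<bar>mass u0\<bar> * \<bar>heat_kernel t x\<bar> \<le> \<bar>mass u0\<bar> * ((4 * pi) powr (- real DIM('a) / 2) * Phi t x)"
    by (intro mult_left_mono) auto
  then show ?thesis
    by (simp add: A0_def m0_def abs_mult mult_ac)
qed

lemma A0_JM: "JMeas (A0 u0)"
  unfolding A0_def heat_kernel_def by measurable

lemma A0_sec: "A0 u0 s \<in> borel_measurable lborel"
  by (rule U_sec_meas[OF A0_JM])

lemma A1_eq: "A 1 t x = A0 u0 t x + duhamel a f (A0 u0) {0<..<t} t x"
  by (simp add: One_nat_def)

lemma A1_diff:
  assumes t: "0 < t"
  shows "\<bar>A 1 t x - A 0 t x\<bar> \<le> c1 * t powr (- sig) * Phi t x"
proof -
  have "\<bar>duhamel a f (A0 u0) {0<..<t} t x\<bar> \<le> (KC TYPE('a) * norm a * (L * m0 powr p) * Phi t x)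
           * (Beta (1 - real DIM('a) * (p - 1) / 2) (1/2) * t powr (1/2 - real DIM('a) * (p - 1) / 2))"
    by (rule duhamel_bound[OF _ t m0_nonneg b0_lt' A0_sec A0_bound]) auto
  also have "\<dots> = c1 * t powr (- sig) * Phi t x"
    by (simp add: c1_def Bt_def b0_def sig_def mult_ac)
  finally show ?thesis by (simp add: A1_eq)
qed

lemma A1_bound:
  assumes t: "0 < t"
  shows "\<bar>A 1 t x\<bar> \<le> (m0 + c1 * t powr (- sig)) * Phi t x"
  using A1_diff[OF t, of x] A0_bound[OF t, of x] by (simp add: algebra_simps)

lemma A1_JM: "JMeas (restr {0<..} (A 1))"
proof -
  have eq: "(\<lambda>z. restr {0<..} (A 1) (fst z) (snd z))
    = (\<lambda>z. (if fst z \<in> {0<..} then A0 u0 (fst z) (snd z) else 0)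
         + (if fst z \<in> {0<..} then duhamel a f (A0 u0) {s. 0 < s \<and> s < fst z} (fst z) (snd z) else 0))"
  proof
    fix z :: "real \<times> 'a"
    have "{s. 0 < s \<and> s < fst z} = {0<..<fst z}" by auto
    then show "restr {0<..} (A 1) (fst z) (snd z) = (if fst z \<in> {0<..} then A0 u0 (fst z) (snd z) else 0)
         + (if fst z \<in> {0<..} then duhamel a f (A0 u0) {s. 0 < s \<and> s < fst z} (fst z) (snd z) else 0)"
      by (simp add: restr_def A1_eq)
  qed
  have d: "(\<lambda>z. if fst z \<in> {0<..} then duhamel a f (A0 u0) {s. 0 < s \<and> s < fst z} (fst z) (snd z) else 0)
      \<in> borel_measurable (lborel \<Otimes>\<^sub>M lborel)"
  proof (rule duhamel_JM[where Q = "\<lambda>t s. 0 < s \<and> s < t"])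
    show "Measurable.pred (lborel \<Otimes>\<^sub>M lborel) (\<lambda>w::real \<times> real. 0 < snd w \<and> snd w < fst w)"
      by (intro pred_intros_logic borel_measurable_pred_less) measurable
    show "{0<..} \<in> sets (borel :: real measure)" by simp
    show "JMeas (A0 u0)" by (rule A0_JM)
    show "\<exists>m\<ge>0. \<forall>y. \<bar>A0 u0 s y\<bar> \<le> m * Phi s y" if "0 < s \<and> s < t" for t s
      using that m0_nonneg A0_bound by blast
  qed auto
  have a: "(\<lambda>z. if fst z \<in> {0<..} then A0 u0 (fst z) (snd z) else (0::real)) \<in> borel_measurable (lborel \<Otimes>\<^sub>M lborel)"
    using A0_JM by measurable
  show ?thesis unfolding eq using a d by measurable
qed

lemma powr_le1: "1 \<le> t \<Longrightarrow> 0 \<le> e \<Longrightarrow> t powr (- e) \<le> (1::real)"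
proof -
  assume a: "1 \<le> t" "0 \<le> e"
  have h: "1 \<le> t powr e" using ge_one_powr_ge_zero[OF a] .
  have "1 / t powr e \<le> 1 / 1" by (rule divide_left_mono) (use h in auto)
  then show ?thesis by (simp add: powr_minus_divide)
qed

definition "Cl j \<longleftrightarrow> (\<exists>m d. 0 \<le> m \<and> 0 \<le> d \<and>
   (\<forall>t>1. \<forall>x. \<bar>A j t x\<bar> \<le> m * Phi t x \<and> \<bar>A (j - 1) t x\<bar> \<le> m * Phi t x
        \<and> \<bar>A j t x - A (j - 1) t x\<bar> \<le> d * t powr (- (real j * sig)) * Phi t x)
   \<and> JMeas (restr {1<..} (A j)) \<and> JMeas (restr {1<..} (A (j - 1))))"

lemma JM_borel: "g \<in> borel_measurable (lborel \<Otimes>\<^sub>M lborel) \<longleftrightarrow> g \<in> borel_measurable (borel \<Otimes>\<^sub>M (borel :: 'a measure))"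
  for g :: "real \<times> 'a \<Rightarrow> real"
proof -
  have "(borel_measurable (lborel \<Otimes>\<^sub>M lborel) :: (real \<times> 'a \<Rightarrow> real) set) = borel_measurable (borel \<Otimes>\<^sub>M borel)"
    by (rule measurable_cong_sets) (auto intro!: sets_pair_measure_cong)
  then show ?thesis by simp
qed

lemma JM_restr1:
  fixes U :: "real \<Rightarrow> 'a \<Rightarrow> real"
  assumes "JMeas U"
  shows "(\<lambda>z. if 1 < fst z then U (fst z) (snd z) else 0) \<in> borel_measurable (lborel \<Otimes>\<^sub>M lborel)"
proof -
  have [measurable]: "(\<lambda>z. U (fst z) (snd z)) \<in> borel_measurable (borel \<Otimes>\<^sub>M (borel :: 'a measure))"
    using assms JM_borel by blast
  have "(\<lambda>z::real \<times> 'a. if 1 < fst z then U (fst z) (snd z) else 0) \<in> borel_measurable (borel \<Otimes>\<^sub>M borel)"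
    by measurable
  then show ?thesis using JM_borel by blast
qed

lemma Cl1: "Cl 1"
proof -
  have bnd: "\<bar>A 1 t x\<bar> \<le> (m0 + c1) * Phi t x \<and> \<bar>A (1 - 1) t x\<bar> \<le> (m0 + c1) * Phi t x
        \<and> \<bar>A 1 t x - A (1 - 1) t x\<bar> \<le> c1 * t powr (- (real 1 * sig)) * Phi t x"
    if t: "1 < t" for t and x :: 'a
  proof (intro conjI)
    have tp: "0 < t" using t by simp
    have tl: "t powr (- sig) \<le> 1" using t sig_pos by (intro powr_le1) auto
    have P: "0 \<le> Phi t x" by (rule Phi_nonneg)
    have "c1 * t powr (- sig) \<le> c1" using mult_left_le[OF tl c1_nonneg] .
    then have "m0 + c1 * t powr (- sig) \<le> m0 + c1" by linarith
    then have "(m0 + c1 * t powr (- sig)) * Phi t x \<le> (m0 + c1) * Phi t x"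
      using P by (rule mult_right_mono)
    then show "\<bar>A 1 t x\<bar> \<le> (m0 + c1) * Phi t x" using A1_bound[OF tp, of x] by linarith
    have "m0 * Phi t x \<le> (m0 + c1) * Phi t x" using c1_nonneg P by (intro mult_right_mono) auto
    then show "\<bar>A (1 - 1) t x\<bar> \<le> (m0 + c1) * Phi t x" using A0_bound[OF tp, of x] by simp
    show "\<bar>A 1 t x - A (1 - 1) t x\<bar> \<le> c1 * t powr (- (real 1 * sig)) * Phi t x"
      using A1_diff[OF tp, of x] by simp
  qed
  have e1: "(\<lambda>z. restr {1<..} (A 1) (fst z) (snd z)) = (\<lambda>z. if 1 < fst z then restr {0<..} (A 1) (fst z) (snd z) else 0)"
    by (auto simp: restr_def fun_eq_iff)
  have j1: "JMeas (restr {1<..} (A 1))" unfolding e1 by (rule JM_restr1[OF A1_JM])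
  have e2: "(\<lambda>z. restr {1<..} (A (1 - 1)) (fst z) (snd z)) = (\<lambda>z. if 1 < fst z then A0 u0 (fst z) (snd z) else 0)"
    by (auto simp: restr_def fun_eq_iff)
  have j2: "JMeas (restr {1<..} (A (1 - 1)))" unfolding e2 by (rule JM_restr1[OF A0_JM])
  have nn: "0 \<le> m0 + c1" "0 \<le> c1" using m0_nonneg c1_nonneg by auto
  have all: "\<forall>t>1. \<forall>x. \<bar>A 1 t x\<bar> \<le> (m0 + c1) * Phi t x \<and> \<bar>A (1 - 1) t x\<bar> \<le> (m0 + c1) * Phi t x
        \<and> \<bar>A 1 t x - A (1 - 1) t x\<bar> \<le> c1 * t powr (- (real 1 * sig)) * Phi t x"
    by (intro allI impI, rule bnd)
  show ?thesis unfolding Cl_def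
    by (intro exI[of _ "m0 + c1"] exI[of _ c1] conjI nn all j1 j2)
qed
end


context mainloc
begin

lemma Asuc_eq:
  assumes "1 \<le> j"
  shows "A (Suc j) t x = A0 u0 t x + duhamel a f (A0 u0) {0<..<1} t x + duhamel a f (restr {1<..} (A j)) {1<..<t} t x"
proof -
  obtain j' where j: "j = Suc j'" using assms by (cases j) auto
  have "duhamel a f (A j) {1<..<t} t x = duhamel a f (restr {1<..} (A j)) {1<..<t} t x"
    by (rule duhamel_cong) (auto simp: restr_def fun_eq_iff)
  then show ?thesis by (simp add: j)
qed

lemma A0_restr_cong: "duhamel a f (A0 u0) {1<..<t} t x = duhamel a f (restr {1<..} (A 0)) {1<..<t} t x"
  by (rule duhamel_cong) (auto simp: restr_def fun_eq_iff)

lemma Adiff_eq: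
  assumes j: "1 \<le> j" and t: "1 < t"
  shows "A (Suc j) t x - A j t x = duhamel a f (restr {1<..} (A j)) {1<..<t} t x - duhamel a f (restr {1<..} (A (j - 1))) {1<..<t} t x"
proof (cases "j = 1")
  case True
  have sp: "duhamel a f (A0 u0) {0<..<t} t x = duhamel a f (A0 u0) {0<..<1} t x + duhamel a f (A0 u0) {1<..<t} t x"
    by (rule duhamel_split[OF t m0_nonneg b0_lt' A0_JM A0_bound]) auto
  show ?thesis using Asuc_eq[OF j, of t x] sp A0_restr_cong[of t x] by (simp add: True A1_eq)
next
  case False
  then obtain j' where j': "j = Suc j'" "1 \<le> j'" using j by (cases j) auto
  show ?thesis using Asuc_eq[OF j, of t x] Asuc_eq[OF j'(2), of t x] by (simp add: j')
qed

lemma dA0_01_bound: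
  assumes t: "1 < t"
  shows "\<bar>duhamel a f (A0 u0) {0<..<1} t x\<bar> \<le> c1 * Phi t x"
proof -
  have tp: "0 < t" using t by simp
  have "\<bar>duhamel a f (A0 u0) {0<..<1} t x\<bar> \<le> (KC TYPE('a) * norm a * (L * m0 powr p) * Phi t x)
           * (Beta (1 - real DIM('a) * (p - 1) / 2) (1/2) * t powr (1/2 - real DIM('a) * (p - 1) / 2))"
    by (rule duhamel_bound[OF _ tp m0_nonneg b0_lt' A0_sec A0_bound]) (use t in auto)
  also have "\<dots> = c1 * t powr (- sig) * Phi t x"
    by (simp add: c1_def Bt_def b0_def sig_def mult_ac)
  also have "\<dots> \<le> c1 * 1 * Phi t x"
    using c1_nonneg t sig_pos Phi_nonneg[of t x] by (intro mult_right_mono mult_left_mono powr_le1) auto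
  finally show ?thesis by simp
qed

lemma Cl_step:
  assumes C: "Cl j" and j: "1 \<le> j" and jK: "Suc j \<le> K"
  shows "Cl (Suc j)"
proof -
  obtain m d where md: "0 \<le> m" "0 \<le> d"
    and bA: "\<And>t x. 1 < t \<Longrightarrow> \<bar>A j t x\<bar> \<le> m * Phi t x"
    and bA': "\<And>t x. 1 < t \<Longrightarrow> \<bar>A (j - 1) t x\<bar> \<le> m * Phi t x"
    and bD: "\<And>t x. 1 < t \<Longrightarrow> \<bar>A j t x - A (j - 1) t x\<bar> \<le> d * t powr (- (real j * sig)) * Phi t x"
    and J1: "JMeas (restr {1<..} (A j))" and J2: "JMeas (restr {1<..} (A (j - 1)))"
    using C unfolding Cl_def by blast
  define c2 where "c2 = KC TYPE('a) * norm a * (L * m powr p) * Bt"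
  have c2: "0 \<le> c2" using L Bt_nonneg by (simp add: c2_def KC_nonneg)
  define m' where "m' = m + m0 + c1 + c2"
  define \<gamma> where "\<gamma> = real j * sig"
  have g: "0 \<le> \<gamma>" using sig_pos by (simp add: \<gamma>_def)
  have sg: "real DIM('a) * (p - 1) / 2 + \<gamma> < 1"
  proof -
    have h1: "real DIM('a) * (p - 1) / 2 = sig + 1/2" by (simp add: sig_def b0_def)
    have h2: "real (Suc j) * sig = sig + real j * sig" by (simp add: algebra_simps)
    show ?thesis unfolding \<gamma>_def using jsig[OF jK] h1 h2 by linarith
  qed
  define d' where "d' = KC TYPE('a) * norm a * (2 * L * m powr (p - 1) * d) * Beta (1 - (real DIM('a) * (p - 1) / 2 + \<gamma>)) (1/2)"
  have d': "0 \<le> d'"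
    using L md sg by (simp add: d'_def KC_nonneg Beta_def)
  have U1b: "\<bar>restr {1<..} (A j) s y\<bar> \<le> m * Phi s y" if "s \<in> {1<..<t}" for t s y
    using that bA[of s y] by (simp add: restr_def)
  have U2b: "\<bar>restr {1<..} (A (j - 1)) s y\<bar> \<le> m * Phi s y" if "s \<in> {1<..<t}" for t s y
    using that bA'[of s y] by (simp add: restr_def)
  have bnd: "\<bar>A (Suc j) t x\<bar> \<le> m' * Phi t x \<and> \<bar>A (Suc j - 1) t x\<bar> \<le> m' * Phi t x
      \<and> \<bar>A (Suc j) t x - A (Suc j - 1) t x\<bar> \<le> d' * t powr (- (real (Suc j) * sig)) * Phi t x"
    if t: "1 < t" for t and x :: 'a
  proof (intro conjI)
    have tp: "0 < t" using t by simp
    have P: "0 \<le> Phi t x" by (rule Phi_nonneg)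
    have tl: "t powr (- sig) \<le> 1" using t sig_pos by (intro powr_le1) auto
    have b2: "\<bar>duhamel a f (restr {1<..} (A j)) {1<..<t} t x\<bar> \<le> c2 * Phi t x"
    proof -
      have "\<bar>duhamel a f (restr {1<..} (A j)) {1<..<t} t x\<bar> \<le> (KC TYPE('a) * norm a * (L * m powr p) * Phi t x)
           * (Beta (1 - real DIM('a) * (p - 1) / 2) (1/2) * t powr (1/2 - real DIM('a) * (p - 1) / 2))"
        by (rule duhamel_bound[OF _ tp md(1) b0_lt' U_sec_meas[OF J1] U1b]) auto
      also have "\<dots> = c2 * t powr (- sig) * Phi t x"
        by (simp add: c2_def Bt_def b0_def sig_def mult_ac)
      also have "\<dots> \<le> c2 * 1 * Phi t x"
        using c2 tl P by (intro mult_right_mono mult_left_mono) auto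
      finally show ?thesis by simp
    qed
    have "\<bar>A (Suc j) t x\<bar> \<le> \<bar>A0 u0 t x\<bar> + \<bar>duhamel a f (A0 u0) {0<..<1} t x\<bar> + \<bar>duhamel a f (restr {1<..} (A j)) {1<..<t} t x\<bar>"
      unfolding Asuc_eq[OF j] by linarith
    also have "\<dots> \<le> m0 * Phi t x + c1 * Phi t x + c2 * Phi t x"
      using A0_bound[OF tp, of x] dA0_01_bound[OF t, of x] b2 by linarith
    also have "\<dots> \<le> m' * Phi t x"
      using md P by (simp add: m'_def algebra_simps)
    finally show "\<bar>A (Suc j) t x\<bar> \<le> m' * Phi t x" .
    have "m * Phi t x \<le> m' * Phi t x" using c1_nonneg c2 m0_nonneg P by (intro mult_right_mono) (auto simp: m'_def)
    then show "\<bar>A (Suc j - 1) t x\<bar> \<le> m' * Phi t x" using bA[OF t, of x] by simp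
    have "\<bar>A (Suc j) t x - A j t x\<bar> = \<bar>duhamel a f (restr {1<..} (A j)) {1<..<t} t x - duhamel a f (restr {1<..} (A (j - 1))) {1<..<t} t x\<bar>"
      by (simp add: Adiff_eq[OF j t])
    also have "\<dots> \<le> (KC TYPE('a) * norm a * (2 * L * m powr (p - 1) * d) * Phi t x)
        * (Beta (1 - (real DIM('a) * (p - 1) / 2 + \<gamma>)) (1/2) * t powr (1/2 - (real DIM('a) * (p - 1) / 2 + \<gamma>)))"
    proof (rule duhamel_diff_bound[OF _ _ tp md g sg J1 J2 U1b U2b])
      fix s y assume s: "s \<in> {1<..<t}"
      show "\<bar>restr {1<..} (A j) s y - restr {1<..} (A (j - 1)) s y\<bar> \<le> (d * s powr (- \<gamma>)) * Phi s y"
        using s bD[of s y] by (simp add: restr_def \<gamma>_def)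
    qed auto
    also have "\<dots> = d' * t powr (- (real (Suc j) * sig)) * Phi t x"
    proof -
      have h1: "real DIM('a) * (p - 1) / 2 = sig + 1/2" by (simp add: sig_def b0_def)
      have h2: "real (Suc j) * sig = sig + real j * sig" by (simp add: algebra_simps)
      have "1/2 - (real DIM('a) * (p - 1) / 2 + \<gamma>) = - (real (Suc j) * sig)"
        unfolding \<gamma>_def using h1 h2 by linarith
      then show ?thesis by (simp add: d'_def mult_ac)
    qed
    finally show "\<bar>A (Suc j) t x - A (Suc j - 1) t x\<bar> \<le> d' * t powr (- (real (Suc j) * sig)) * Phi t x" by simp
  qed
  have all: "\<forall>t>1. \<forall>x. \<bar>A (Suc j) t x\<bar> \<le> m' * Phi t x \<and> \<bar>A (Suc j - 1) t x\<bar> \<le> m' * Phi t x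
      \<and> \<bar>A (Suc j) t x - A (Suc j - 1) t x\<bar> \<le> d' * t powr (- (real (Suc j) * sig)) * Phi t x"
    by (intro allI impI, rule bnd)
  have m': "0 \<le> m'" using md c1_nonneg c2 m0_nonneg by (simp add: m'_def)
  have e: "(\<lambda>z. restr {1<..} (A (Suc j)) (fst z) (snd z))
    = (\<lambda>z. (if 1 < fst z then A0 u0 (fst z) (snd z) else 0)
         + (if fst z \<in> {1<..} then duhamel a f (A0 u0) {s. 0 < s \<and> s < 1} (fst z) (snd z) else 0)
         + (if fst z \<in> {1<..} then duhamel a f (restr {1<..} (A j)) {s. 1 < s \<and> s < fst z} (fst z) (snd z) else 0))"
  proof
    fix z :: "real \<times> 'a"
    have e1: "{s. 0 < s \<and> s < 1} = {0<..<(1::real)}" by auto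
    have e2: "{s. 1 < s \<and> s < fst z} = {1<..<fst z}" by auto
    show "restr {1<..} (A (Suc j)) (fst z) (snd z) = (if 1 < fst z then A0 u0 (fst z) (snd z) else 0)
         + (if fst z \<in> {1<..} then duhamel a f (A0 u0) {s. 0 < s \<and> s < 1} (fst z) (snd z) else 0)
         + (if fst z \<in> {1<..} then duhamel a f (restr {1<..} (A j)) {s. 1 < s \<and> s < fst z} (fst z) (snd z) else 0)"
      unfolding e1 e2 by (simp add: restr_def Asuc_eq[OF j])
  qed
  have ja: "(\<lambda>z. if 1 < fst z then A0 u0 (fst z) (snd z) else 0) \<in> borel_measurable (lborel \<Otimes>\<^sub>M lborel)"
    by (rule JM_restr1[OF A0_JM])
  have jb: "(\<lambda>z. if fst z \<in> {1<..} then duhamel a f (A0 u0) {s. 0 < s \<and> s < 1} (fst z) (snd z) else 0)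
      \<in> borel_measurable (lborel \<Otimes>\<^sub>M lborel)"
  proof (rule duhamel_JM[where Q = "\<lambda>t s. 0 < s \<and> s < 1"])
    show "Measurable.pred (lborel \<Otimes>\<^sub>M lborel) (\<lambda>w::real \<times> real. 0 < snd w \<and> snd w < 1)"
      by (intro pred_intros_logic borel_measurable_pred_less) measurable
    show "{1<..} \<in> sets (borel :: real measure)" by simp
    show "JMeas (A0 u0)" by (rule A0_JM)
    show "\<exists>m\<ge>0. \<forall>y. \<bar>A0 u0 s y\<bar> \<le> m * Phi s y" if "0 < s \<and> s < 1" for t s
      using that m0_nonneg A0_bound by blast
  qed auto
  have jc: "(\<lambda>z. if fst z \<in> {1<..} then duhamel a f (restr {1<..} (A j)) {s. 1 < s \<and> s < fst z} (fst z) (snd z) else 0)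
      \<in> borel_measurable (lborel \<Otimes>\<^sub>M lborel)"
  proof (rule duhamel_JM[where Q = "\<lambda>t s. 1 < s \<and> s < t"])
    show "Measurable.pred (lborel \<Otimes>\<^sub>M lborel) (\<lambda>w::real \<times> real. 1 < snd w \<and> snd w < fst w)"
      by (intro pred_intros_logic borel_measurable_pred_less) measurable
    show "{1<..} \<in> sets (borel :: real measure)" by simp
    show "JMeas (restr {1<..} (A j))" by (rule J1)
    show "\<exists>m\<ge>0. \<forall>y. \<bar>restr {1<..} (A j) s y\<bar> \<le> m * Phi s y" if "1 < s \<and> s < t" for t s
      using that md(1) U1b[of s "s + 1"] by auto
  qed auto
  have J3: "JMeas (restr {1<..} (A (Suc j)))" unfolding e using ja jb jc by measurable
  have J4: "JMeas (restr {1<..} (A (Suc j - 1)))" using J1 by simp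
  show ?thesis unfolding Cl_def
    by (intro exI[of _ m'] exI[of _ d'] conjI m' d' all J3 J4)
qed

lemma Cl_all: "1 \<le> j \<Longrightarrow> j \<le> K \<Longrightarrow> Cl j"
proof (induction j)
  case 0 then show ?case by simp
next
  case (Suc j)
  show ?case
  proof (cases "j = 0")
    case True then show ?thesis using Cl1 by simp
  next
    case False
    then have "1 \<le> j" by simp
    moreover have "Cl j" using Suc False by simp
    ultimately show ?thesis using Cl_step Suc.prems by blast
  qed
qed

end


definition KQ :: "ereal \<Rightarrow> 'a::euclidean_space itself \<Rightarrow> real" where
  "KQ q _ = (if q = \<infinity> then 1 else ((8 / real_of_ereal q) powr (real DIM('a) / 2) * enn2real (KG TYPE('a))) powr (1 / real_of_ereal q))"

lemma KQ_nonneg: "0 \<le> KQ q TYPE('a::euclidean_space)"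
  by (simp add: KQ_def)

lemma LQ_bound:
  fixes g :: "'a::euclidean_space \<Rightarrow> real" and q :: ereal
  assumes q: "1 \<le> q" and t: "0 < t" and c: "0 \<le> c"
    and gm: "g \<in> borel_measurable lborel" and gb: "\<And>x. \<bar>g x\<bar> \<le> c * Phi t x"
  shows "ennreal (t powr (real DIM('a) / 2 * (1 - inv_exp q))) * Lq_norm q g \<le> ennreal (c * KQ q TYPE('a))"
proof (cases q)
  case (real r)
  then have r: "1 \<le> r" using q by simp
  show ?thesis using Lq_fin_bound[OF r t c gb] real by (simp add: inv_exp_def KQ_def)
next
  case PInf
  then show ?thesis using Lq_inf_bound[OF t c gm gb] by (simp add: inv_exp_def KQ_def)
next
  case MInf
  then show ?thesis using q by simp
qed

theorem lemma4p1:
  fixes a :: "'a::euclidean_space" and f f' :: "real \<Rightarrow> real"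
    and u0 :: "'a \<Rightarrow> real" and p Cf :: real and k :: nat
  assumes a_nz: "a \<noteq> 0"
    and p_gt1: "1 < p"
    and f_deriv: "\<And>\<xi>. (f has_real_derivative f' \<xi>) (at \<xi>)"
    and f'_cont: "continuous_on UNIV f'"
    and f_nz: "\<exists>\<xi>. f \<xi> \<noteq> 0"
    and f0: "f 0 = 0"
    and f_lip: "\<And>\<xi> \<eta>. \<bar>f \<xi> - f \<eta>\<bar> \<le> Cf * (\<bar>\<xi>\<bar> powr (p - 1) + \<bar>\<eta>\<bar> powr (p - 1)) * \<bar>\<xi> - \<eta>\<bar>"
    and k_pos: "0 < k"
    and p_low: "1 + 1 / real DIM('a) < p"
    and p_up: "p < 1 + real (k + 1) / (real k * real DIM('a))"
    and u0_L1: "integrable lborel u0"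
  shows "\<forall>q::ereal. 1 \<le> q \<longrightarrow>
     (\<exists>C>0.
        (\<forall>t>1. ennreal (t powr (real DIM('a) / 2 * (1 - inv_exp q))) * Lq_norm q (Aiter a f u0 k t) \<le> ennreal C
             \<and> ennreal (t powr (real DIM('a) / 2 * (1 - inv_exp q)))
                 * Lq_norm q (\<lambda>x. Aiter a f u0 k t x - Aiter a f u0 (k - 1) t x)
               \<le> ennreal (C * t powr (- real k * (real DIM('a) / 2 * (p - 1) - 1 / 2))))
      \<and> (k = 1 \<longrightarrow> (\<forall>t>0. ennreal (t powr (real DIM('a) / 2 * (1 - inv_exp q)))
                 * Lq_norm q (\<lambda>x. Aiter a f u0 k t x - Aiter a f u0 (k - 1) t x)
               \<le> ennreal (C * t powr (- real k * (real DIM('a) / 2 * (p - 1) - 1 / 2))))))"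
proof -
  define L where "L = \<bar>Cf\<bar>"
  have fc: "continuous_on UNIV f"
    using f_deriv by (meson DERIV_isCont continuous_at_imp_continuous_on)
  have fL: "\<bar>f \<xi> - f \<eta>\<bar> \<le> L * (\<bar>\<xi>\<bar> powr (p - 1) + \<bar>\<eta>\<bar> powr (p - 1)) * \<bar>\<xi> - \<eta>\<bar>" for \<xi> \<eta>
  proof -
    have "Cf * (\<bar>\<xi>\<bar> powr (p - 1) + \<bar>\<eta>\<bar> powr (p - 1)) * \<bar>\<xi> - \<eta>\<bar> \<le> L * (\<bar>\<xi>\<bar> powr (p - 1) + \<bar>\<eta>\<bar> powr (p - 1)) * \<bar>\<xi> - \<eta>\<bar>"
      unfolding L_def by (intro mult_right_mono) auto
    then show ?thesis using f_lip[of \<xi> \<eta>] by linarith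
  qed
  interpret mainloc f L p a u0 k
    by unfold_locales (use fc fL f0 p_gt1 k_pos p_low p_up in \<open>auto simp: L_def\<close>)
  have Ck: "Cl k" by (rule Cl_all) (use k_pos in auto)
  obtain m d where md: "0 \<le> m" "0 \<le> d"
    and bA: "\<And>t x. 1 < t \<Longrightarrow> \<bar>A k t x\<bar> \<le> m * Phi t x"
    and bD: "\<And>t x. 1 < t \<Longrightarrow> \<bar>A k t x - A (k - 1) t x\<bar> \<le> d * t powr (- (real k * sig)) * Phi t x"
    and J1: "JMeas (restr {1<..} (A k))" and J2: "JMeas (restr {1<..} (A (k - 1)))"
    using Ck unfolding Cl_def by blast
  have Mk: "(\<lambda>x. A j t x) \<in> borel_measurable lborel" if "1 < t" "JMeas (restr {1<..} (A j))" for t j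
  proof -
    have "restr {1<..} (A j) t \<in> borel_measurable lborel" by (rule U_sec_meas[OF that(2)])
    moreover have "restr {1<..} (A j) t = (\<lambda>x. A j t x)" using that(1) by (auto simp: restr_def fun_eq_iff)
    ultimately show ?thesis by simp
  qed
  have ex: "- real k * (real DIM('a) / 2 * (p - 1) - 1 / 2) = - (real k * sig)"
  proof -
    have h: "real DIM('a) / 2 * (p - 1) - 1 / 2 = sig" by (simp add: sig_def b0_def)
    show ?thesis unfolding h by simp
  qed
  show ?thesis
  proof (intro allI impI)
    fix q :: ereal assume q: "1 \<le> q"
    define Kq where "Kq = KQ q TYPE('a)"
    have Kq: "0 \<le> Kq" by (simp add: Kq_def KQ_nonneg)
    define C where "C = (m + d + c1 + 1) * (Kq + 1)"
    have C: "0 < C" using md c1_nonneg Kq by (simp add: C_def add_pos_nonneg)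
    have le: "z * Kq \<le> C" if "0 \<le> z" "z \<le> m + d + c1" for z
    proof -
      have "z * Kq \<le> (m + d + c1 + 1) * (Kq + 1)"
        using that Kq md c1_nonneg by (intro mult_mono) auto
      then show ?thesis by (simp add: C_def)
    qed
    have part1: "ennreal (t powr (real DIM('a) / 2 * (1 - inv_exp q))) * Lq_norm q (A k t) \<le> ennreal C" if t: "1 < t" for t
    proof -
      have "ennreal (t powr (real DIM('a) / 2 * (1 - inv_exp q))) * Lq_norm q (\<lambda>x. A k t x) \<le> ennreal (m * Kq)"
        unfolding Kq_def by (rule LQ_bound[OF q _ md(1) Mk[OF t J1] bA[OF t]]) (use t in auto)
      also have "\<dots> \<le> ennreal C" using le[of m] md c1_nonneg by (intro ennreal_leI) auto
      finally show ?thesis by simp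
    qed
    have part2: "ennreal (t powr (real DIM('a) / 2 * (1 - inv_exp q))) * Lq_norm q (\<lambda>x. A k t x - A (k - 1) t x)
        \<le> ennreal (C * t powr (- real k * (real DIM('a) / 2 * (p - 1) - 1 / 2)))" if t: "1 < t" for t
    proof -
      have gm: "(\<lambda>x. A k t x - A (k - 1) t x) \<in> borel_measurable lborel"
        using Mk[OF t J1] Mk[OF t J2] by measurable
      have "ennreal (t powr (real DIM('a) / 2 * (1 - inv_exp q))) * Lq_norm q (\<lambda>x. A k t x - A (k - 1) t x)
          \<le> ennreal ((d * t powr (- (real k * sig))) * Kq)"
        unfolding Kq_def by (rule LQ_bound[OF q _ _ gm]) (use t md bD[OF t] in \<open>auto simp: mult_ac\<close>)
      also have "\<dots> \<le> ennreal (C * t powr (- (real k * sig)))"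
      proof (intro ennreal_leI)
        have "d * Kq \<le> C" using le[of d] md c1_nonneg by auto
        then have "(d * Kq) * t powr (- (real k * sig)) \<le> C * t powr (- (real k * sig))"
          by (rule mult_right_mono) simp
        then show "d * t powr (- (real k * sig)) * Kq \<le> C * t powr (- (real k * sig))" by (simp add: mult_ac)
      qed
      finally show ?thesis unfolding ex .
    qed
    have part3: "ennreal (t powr (real DIM('a) / 2 * (1 - inv_exp q))) * Lq_norm q (\<lambda>x. A k t x - A (k - 1) t x)
        \<le> ennreal (C * t powr (- real k * (real DIM('a) / 2 * (p - 1) - 1 / 2)))" if t: "0 < t" and k1: "k = 1" for t
    proof -
      have e1: "restr {0<..} (A 1) t = (\<lambda>x. A 1 t x)" using t by (auto simp: restr_def fun_eq_iff)
      have m1: "(\<lambda>x. A 1 t x) \<in> borel_measurable lborel"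
        using U_sec_meas[OF A1_JM, of t] unfolding e1 .
      have gm: "(\<lambda>x. A k t x - A (k - 1) t x) \<in> borel_measurable lborel"
        using borel_measurable_diff[OF m1 A0_sec[of t]] k1 by simp
      have "ennreal (t powr (real DIM('a) / 2 * (1 - inv_exp q))) * Lq_norm q (\<lambda>x. A k t x - A (k - 1) t x)
          \<le> ennreal ((c1 * t powr (- sig)) * Kq)"
        unfolding Kq_def by (rule LQ_bound[OF q t _ gm]) (use c1_nonneg A1_diff[OF t] k1 in \<open>auto simp: mult_ac\<close>)
      also have "\<dots> \<le> ennreal (C * t powr (- (real k * sig)))"
      proof (intro ennreal_leI)
        have "c1 * Kq \<le> C" using le[of c1] md c1_nonneg by auto
        then have "(c1 * Kq) * t powr (- sig) \<le> C * t powr (- sig)"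
          by (rule mult_right_mono) simp
        then show "c1 * t powr (- sig) * Kq \<le> C * t powr (- (real k * sig))" using k1 by (simp add: mult_ac)
      qed
      finally show ?thesis unfolding ex .
    qed
    show "\<exists>C>0. (\<forall>t>1. ennreal (t powr (real DIM('a) / 2 * (1 - inv_exp q))) * Lq_norm q (Aiter a f u0 k t) \<le> ennreal C
             \<and> ennreal (t powr (real DIM('a) / 2 * (1 - inv_exp q)))
                 * Lq_norm q (\<lambda>x. Aiter a f u0 k t x - Aiter a f u0 (k - 1) t x)
               \<le> ennreal (C * t powr (- real k * (real DIM('a) / 2 * (p - 1) - 1 / 2))))
      \<and> (k = 1 \<longrightarrow> (\<forall>t>0. ennreal (t powr (real DIM('a) / 2 * (1 - inv_exp q)))
                 * Lq_norm q (\<lambda>x. Aiter a f u0 k t x - Aiter a f u0 (k - 1) t x)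
               \<le> ennreal (C * t powr (- real k * (real DIM('a) / 2 * (p - 1) - 1 / 2)))))"
      using C part1 part2 part3 by blast
  qed
qed


end
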